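(* Let $V:S^1\to\mathbb{R}$ be of class $C^{k-1,1}(S^1)$ with $k\ge1$ and let $\phi(\theta)=e^{-V(\theta)}$. Let $\gamma_n>0$ be the leading coefficient of the orthonormal polynomial $p_n$ of degree $n$ with respect to $\phi$ on the unit circle, and let $V_0=\frac{1}{2\pi}\int_{-\pi}^\pi V(\theta)d\theta$. Then there is a constant $K>0$ such that \[ \left|\gamma_n^2e^{-V_0}-1\right|\le K\frac{\log(n)}{n^{2k}} \] for all sufficiently large $n$.
   Context: $C^{k-1,1}(S^1)$: functions on the circle whose periodic extension has $k-1$ Lipschitz continuous derivatives. The orthonormal polynomials $p_n(z)=\gamma_nz^n+\dots$, $\gamma_n>0$, satisfy $\langle p_m,p_n\rangle_\phi=\delta_{mn}$ where $\langle f,g\rangle_\phi=\frac{1}{2\pi}\int_{-\pi}^{\pi}f(e^{i\theta})\overline{g(e^{i\theta})}\phi(\theta)d\theta$. *)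

theory Defs
  imports "HOL-Analysis.Analysis" "HOL-Computational_Algebra.Polynomial"
begin

text \<open>C^{k-1,1}(S^1): a function on the circle, viewed as a 2pi-periodic function
  of the angle theta, whose periodic extension has k-1 derivatives, the (k-1)-th one
  being Lipschitz continuous.\<close>
definition C_lip_circle :: "nat \<Rightarrow> (real \<Rightarrow> real) \<Rightarrow> bool" where
  "C_lip_circle k V \<longleftrightarrow>
     (\<forall>x. V (x + 2 * pi) = V x) \<and>
     (\<exists>D :: nat \<Rightarrow> real \<Rightarrow> real. D 0 = V \<and>
        (\<forall>j < k - 1. \<forall>x. (D j has_real_derivative D (Suc j) x) (at x)) \<and>
        (\<exists>L. \<forall>x y. \<bar>D (k - 1) x - D (k - 1) y\<bar> \<le> L * \<bar>x - y\<bar>))"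

definition circ_inner :: "(real \<Rightarrow> real) \<Rightarrow> complex poly \<Rightarrow> complex poly \<Rightarrow> complex" where
  "circ_inner \<phi> f g =
     complex_of_real (1 / (2 * pi)) *
     integral {-pi..pi} (\<lambda>\<theta>. poly f (cis \<theta>) * cnj (poly g (cis \<theta>)) * complex_of_real (\<phi> \<theta>))"

end

theory Submission
  imports Defs "HOL-Complex_Analysis.Complex_Analysis"
begin


lemma has_vd_cis_lin:
  "((\<lambda>\<theta>. cis (c * \<theta>)) has_vector_derivative (\<i> * of_real c * cis (c * \<theta>))) (at \<theta> within S)"
proof -
  have "((\<lambda>\<theta>. cis (c * \<theta>)) has_derivative (\<lambda>t. (c * t) *\<^sub>R (\<i> * cis (c * \<theta>)))) (at \<theta> within S)"
    by (auto intro!: derivative_eq_intros)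
  then show ?thesis unfolding has_vector_derivative_def
    by (simp add: scaleR_conv_of_real algebra_simps)
qed

lemma int_cis_has:
  fixes m :: int
  shows "((\<lambda>\<theta>. cis (of_int m * \<theta>)) has_integral (if m = 0 then 2*pi else 0)) {-pi..pi}"
proof (cases "m = 0")
  case True
  then show ?thesis using has_integral_const_real[of "1::complex" "-pi" pi]
    by (simp add: scaleR_conv_of_real)
next
  case False
  let ?F = "\<lambda>\<theta>. cis (of_int m * \<theta>) / (\<i> * of_int m)"
  have "((\<lambda>\<theta>. cis (of_int m * \<theta>)) has_integral (?F pi - ?F (-pi))) {-pi..pi}"
  proof (rule fundamental_theorem_of_calculus)
    fix x assume "x \<in> {-pi..pi}"
    have "(?F has_vector_derivative ((\<i> * of_real (of_int m) * cis (of_int m * x)) / (\<i> * of_int m))) (at x within {-pi..pi})"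
      using has_vd_cis_lin[of "of_int m" x "{-pi..pi}"]
      by (intro has_vector_derivative_divide) auto
    then show "(?F has_vector_derivative cis (of_int m * x)) (at x within {-pi..pi})"
      using False by simp
  qed simp
  moreover have "cis (of_int m * pi) = cis (of_int m * (-pi))"
  proof -
    have "cis (of_int m * pi) = cis (of_int m * (-pi)) * cis (2 * pi * of_int m)"
      by (simp add: cis_mult algebra_simps)
    then show ?thesis by simp
  qed
  ultimately show ?thesis using False by simp
qed

lemma int_cis:
  fixes m :: int
  shows "integral {-pi..pi} (\<lambda>\<theta>. cis (of_int m * \<theta>)) = (if m = 0 then 2*pi else 0)"
  using int_cis_has integral_unique by blast



definition ecis :: "int \<Rightarrow> real \<Rightarrow> complex" where
  "ecis j \<theta> = cis (of_int j * \<theta>)"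

definition ip :: "(real \<Rightarrow> complex) \<Rightarrow> (real \<Rightarrow> complex) \<Rightarrow> complex" where
  "ip f g = integral {-pi..pi} (\<lambda>\<theta>. f \<theta> * cnj (g \<theta>))"

abbreviation CC :: "(real \<Rightarrow> complex) \<Rightarrow> bool" where
  "CC f \<equiv> continuous_on {-pi..pi} f"

lemma CC_ecis [simp, intro]: "CC (ecis j)"
  unfolding ecis_def by (intro continuous_intros)

lemma CC_integrable: "CC f \<Longrightarrow> f integrable_on {-pi..pi}"
  by (rule integrable_continuous_interval)

lemma CC_prod_int: "CC f \<Longrightarrow> CC g \<Longrightarrow> (\<lambda>\<theta>. f \<theta> * cnj (g \<theta>)) integrable_on {-pi..pi}"
  by (intro CC_integrable continuous_intros)

lemma ip_add_left: "CC f \<Longrightarrow> CC g \<Longrightarrow> CC h \<Longrightarrow> ip (\<lambda>\<theta>. f \<theta> + g \<theta>) h = ip f h + ip g h"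
  unfolding ip_def by (simp add: distrib_right integral_add CC_prod_int)

lemma ip_diff_left: "CC f \<Longrightarrow> CC g \<Longrightarrow> CC h \<Longrightarrow> ip (\<lambda>\<theta>. f \<theta> - g \<theta>) h = ip f h - ip g h"
  unfolding ip_def by (simp add: left_diff_distrib integral_diff CC_prod_int)

lemma ip_scale_left: "CC f \<Longrightarrow> CC h \<Longrightarrow> ip (\<lambda>\<theta>. c * f \<theta>) h = c * ip f h"
proof -
  assume a: "CC f" "CC h"
  have "ip (\<lambda>\<theta>. c * f \<theta>) h = integral {-pi..pi} (\<lambda>\<theta>. c * (f \<theta> * cnj (h \<theta>)))"
    unfolding ip_def by (simp add: mult.assoc)
  also have "\<dots> = c * ip f h"
    unfolding ip_def by (rule integral_mult_right)
  finally show ?thesis .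
qed

lemma ip_cnj: "ip g f = cnj (ip f g)"
  unfolding ip_def integral_cnj by (simp add: mult.commute)

lemma ip_add_right: "CC f \<Longrightarrow> CC g \<Longrightarrow> CC h \<Longrightarrow> ip h (\<lambda>\<theta>. f \<theta> + g \<theta>) = ip h f + ip h g"
proof -
  assume a: "CC f" "CC g" "CC h"
  have "ip h (\<lambda>\<theta>. f \<theta> + g \<theta>) = cnj (ip (\<lambda>\<theta>. f \<theta> + g \<theta>) h)" by (rule ip_cnj)
  also have "\<dots> = cnj (ip f h + ip g h)" using a by (simp add: ip_add_left)
  finally show ?thesis by (simp add: ip_cnj[of h f] ip_cnj[of h g])
qed

lemma ip_diff_right: "CC f \<Longrightarrow> CC g \<Longrightarrow> CC h \<Longrightarrow> ip h (\<lambda>\<theta>. f \<theta> - g \<theta>) = ip h f - ip h g"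
proof -
  assume a: "CC f" "CC g" "CC h"
  have "ip h (\<lambda>\<theta>. f \<theta> - g \<theta>) = cnj (ip (\<lambda>\<theta>. f \<theta> - g \<theta>) h)" by (rule ip_cnj)
  also have "\<dots> = cnj (ip f h - ip g h)" using a by (simp add: ip_diff_left)
  finally show ?thesis by (simp add: ip_cnj[of h f] ip_cnj[of h g])
qed

lemma ip_scale_right: "CC f \<Longrightarrow> CC h \<Longrightarrow> ip h (\<lambda>\<theta>. c * f \<theta>) = cnj c * ip h f"
proof -
  assume a: "CC f" "CC h"
  have "ip h (\<lambda>\<theta>. c * f \<theta>) = cnj (ip (\<lambda>\<theta>. c * f \<theta>) h)" by (rule ip_cnj)
  also have "\<dots> = cnj (c * ip f h)" using a by (simp add: ip_scale_left)
  finally show ?thesis by (simp add: ip_cnj[of h f])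
qed

lemma ip_sum_left:
  assumes "finite J" "\<And>j. j \<in> J \<Longrightarrow> CC (f j)" "CC h"
  shows "ip (\<lambda>\<theta>. \<Sum>j\<in>J. f j \<theta>) h = (\<Sum>j\<in>J. ip (f j) h)"
proof -
  have "ip (\<lambda>\<theta>. \<Sum>j\<in>J. f j \<theta>) h = integral {-pi..pi} (\<lambda>\<theta>. \<Sum>j\<in>J. f j \<theta> * cnj (h \<theta>))"
    unfolding ip_def by (simp add: sum_distrib_right)
  also have "\<dots> = (\<Sum>j\<in>J. ip (f j) h)"
    unfolding ip_def using assms by (intro integral_sum) (auto intro: CC_prod_int)
  finally show ?thesis .
qed

lemma ip_sum_right:
  assumes "finite J" "\<And>j. j \<in> J \<Longrightarrow> CC (f j)" "CC h"
  shows "ip h (\<lambda>\<theta>. \<Sum>j\<in>J. f j \<theta>) = (\<Sum>j\<in>J. ip h (f j))"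
proof -
  have "ip h (\<lambda>\<theta>. \<Sum>j\<in>J. f j \<theta>) = cnj (ip (\<lambda>\<theta>. \<Sum>j\<in>J. f j \<theta>) h)" by (rule ip_cnj)
  also have "\<dots> = (\<Sum>j\<in>J. cnj (ip (f j) h))" using ip_sum_left[OF assms] by (simp add: cnj_sum)
  also have "\<dots> = (\<Sum>j\<in>J. ip h (f j))" by (simp add: ip_cnj[of h])
  finally show ?thesis .
qed

lemma ip_ecis: "ip (ecis i) (ecis j) = (if i = j then 2 * pi else 0)"
proof -
  have e: "(\<lambda>\<theta>. ecis i \<theta> * cnj (ecis j \<theta>)) = (\<lambda>\<theta>. cis (of_int (i - j) * \<theta>))"
    by (rule ext) (simp add: ecis_def cis_cnj cis_mult algebra_simps)
  show ?thesis unfolding ip_def e int_cis by simp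
qed

lemma ip_self: "CC f \<Longrightarrow> ip f f = of_real (integral {-pi..pi} (\<lambda>\<theta>. (cmod (f \<theta>))\<^sup>2))"
proof -
  assume a: "CC f"
  have "ip f f = integral {-pi..pi} (\<lambda>\<theta>. of_real ((cmod (f \<theta>))\<^sup>2))"
    unfolding ip_def by (simp only: complex_norm_square)
  also have "\<dots> = of_real (integral {-pi..pi} (\<lambda>\<theta>. (cmod (f \<theta>))\<^sup>2))"
    using a by (intro integral_unique has_integral_of_real integrable_integral integrable_continuous_interval continuous_intros)
  finally show ?thesis .
qed

definition trig :: "int set \<Rightarrow> (int \<Rightarrow> complex) \<Rightarrow> real \<Rightarrow> complex" where
  "trig J c \<theta> = (\<Sum>j\<in>J. c j * ecis j \<theta>)"

definition fc :: "(real \<Rightarrow> complex) \<Rightarrow> int \<Rightarrow> complex" where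
  "fc f j = ip f (ecis j) / (2 * pi)"

definition nrm :: "(real \<Rightarrow> complex) \<Rightarrow> real" where
  "nrm f = Re (ip f f)"

lemma CC_trig [simp, intro]: "CC (trig J c)"
  unfolding trig_def ecis_def by (intro continuous_intros)

lemma CC_trig' [simp, intro]: "CC (\<lambda>\<theta>. trig J c \<theta>)"
  using CC_trig by simp

lemma ip_trig_ecis:
  assumes "finite J"
  shows "ip (trig J c) (ecis i) = (if i \<in> J then of_real (2 * pi) * c i else 0)"
proof -
  have "ip (trig J c) (ecis i) = (\<Sum>j\<in>J. ip (\<lambda>\<theta>. c j * ecis j \<theta>) (ecis i))"
    unfolding trig_def using assms by (intro ip_sum_left) (auto intro: continuous_intros)
  also have "\<dots> = (\<Sum>j\<in>J. c j * (if j = i then of_real (2 * pi) else 0))"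
    by (intro sum.cong refl) (simp add: ip_scale_left ip_ecis)
  also have "\<dots> = (if i \<in> J then of_real (2 * pi) * c i else 0)"
    using assms by (simp add: if_distrib[of "\<lambda>x. c _ * x"] sum.delta' cong: if_cong)
  finally show ?thesis .
qed

lemma ip_f_trig:
  assumes "finite J" "CC f"
  shows "ip f (trig J d) = (\<Sum>j\<in>J. cnj (d j) * ip f (ecis j))"
proof -
  have "ip f (trig J d) = (\<Sum>j\<in>J. ip f (\<lambda>\<theta>. d j * ecis j \<theta>))"
    unfolding trig_def using assms by (intro ip_sum_right) (auto intro: continuous_intros)
  also have "\<dots> = (\<Sum>j\<in>J. cnj (d j) * ip f (ecis j))"
    using assms by (intro sum.cong refl) (simp add: ip_scale_right)
  finally show ?thesis .
qed

lemma ip_trig_trig: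
  assumes "finite J"
  shows "ip (trig J c) (trig J d) = of_real (2 * pi) * (\<Sum>j\<in>J. c j * cnj (d j))"
  using assms by (simp add: ip_f_trig ip_trig_ecis sum_distrib_left algebra_simps)

lemma nrm_eq: "CC f \<Longrightarrow> nrm f = integral {-pi..pi} (\<lambda>\<theta>. (cmod (f \<theta>))\<^sup>2)"
  unfolding nrm_def by (simp add: ip_self)

lemma nrm_ge0: "CC f \<Longrightarrow> nrm f \<ge> 0"
  by (simp add: nrm_eq integral_nonneg integrable_continuous_interval continuous_intros)

lemma ip_self_nrm: "CC f \<Longrightarrow> ip f f = of_real (nrm f)"
  by (simp add: nrm_eq ip_self)

lemma nrm_trig:
  assumes "finite J"
  shows "nrm (trig J c) = 2 * pi * (\<Sum>j\<in>J. (cmod (c j))\<^sup>2)"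
proof -
  have "ip (trig J c) (trig J c) = of_real (2 * pi * (\<Sum>j\<in>J. (cmod (c j))\<^sup>2))"
    using assms by (simp only: ip_trig_trig complex_norm_square[symmetric] of_real_sum of_real_mult)
  then show ?thesis unfolding nrm_def by simp
qed

lemma pythag:
  assumes "CC a" "CC b" "ip a b = 0"
  shows "nrm (\<lambda>\<theta>. a \<theta> + b \<theta>) = nrm a + nrm b"
proof -
  have ba: "ip b a = 0" using assms(3) by (simp add: ip_cnj[of b a])
  have "ip (\<lambda>\<theta>. a \<theta> + b \<theta>) (\<lambda>\<theta>. a \<theta> + b \<theta>) = ip a a + ip a b + (ip b a + ip b b)"
    using assms(1,2) by (simp add: ip_add_left ip_add_right continuous_intros)
  then show ?thesis unfolding nrm_def using assms(3) ba by simp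
qed

lemma fc_orth:
  assumes "CC f" "finite J" "i \<in> J"
  shows "ip (\<lambda>\<theta>. f \<theta> - trig J (fc f) \<theta>) (ecis i) = 0"
  using assms by (simp add: ip_diff_left ip_trig_ecis fc_def)

lemma fc_orth_trig:
  assumes "CC f" "finite J"
  shows "ip (\<lambda>\<theta>. f \<theta> - trig J (fc f) \<theta>) (trig J d) = 0"
  using assms by (simp add: ip_f_trig fc_orth continuous_intros)

lemma trig_diff: "trig J c \<theta> - trig J d \<theta> = trig J (\<lambda>j. c j - d j) \<theta>"
  unfolding trig_def by (simp add: sum_subtractf left_diff_distrib)

lemma best_approx:
  assumes "CC f" "finite J"
  shows "nrm (\<lambda>\<theta>. f \<theta> - trig J d \<theta>)
        = nrm (\<lambda>\<theta>. f \<theta> - trig J (fc f) \<theta>) + 2 * pi * (\<Sum>j\<in>J. (cmod (fc f j - d j))\<^sup>2)"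
proof -
  have e: "(\<lambda>\<theta>. f \<theta> - trig J d \<theta>) = (\<lambda>\<theta>. (f \<theta> - trig J (fc f) \<theta>) + trig J (\<lambda>j. fc f j - d j) \<theta>)"
    by (rule ext) (simp add: trig_diff[symmetric])
  have "nrm (\<lambda>\<theta>. (f \<theta> - trig J (fc f) \<theta>) + trig J (\<lambda>j. fc f j - d j) \<theta>)
      = nrm (\<lambda>\<theta>. f \<theta> - trig J (fc f) \<theta>) + nrm (trig J (\<lambda>j. fc f j - d j))"
    using assms by (intro pythag[where b = "trig J (\<lambda>j. fc f j - d j)", simplified])
       (auto intro: continuous_intros fc_orth_trig)
  then show ?thesis using e assms by (simp add: nrm_trig)
qed

lemma bessel:
  assumes "CC f" "finite J"
  shows "nrm f = nrm (\<lambda>\<theta>. f \<theta> - trig J (fc f) \<theta>) + 2 * pi * (\<Sum>j\<in>J. (cmod (fc f j))\<^sup>2)"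
  using best_approx[OF assms, of "\<lambda>_. 0"] by (simp add: trig_def)

lemma bessel_le:
  assumes "CC f" "finite J"
  shows "2 * pi * (\<Sum>j\<in>J. (cmod (fc f j))\<^sup>2) \<le> nrm f"
  using bessel[OF assms] nrm_ge0[of "\<lambda>\<theta>. f \<theta> - trig J (fc f) \<theta>"] assms
  by (simp add: continuous_intros)



definition is_trig :: "(real \<Rightarrow> complex) \<Rightarrow> bool" where
  "is_trig h \<longleftrightarrow> (\<exists>J d. finite J \<and> (\<forall>\<theta>. h \<theta> = trig J d \<theta>))"

lemma trig_extend:
  assumes "finite K" "J \<subseteq> K"
  shows "trig J d \<theta> = trig K (\<lambda>j. if j \<in> J then d j else 0) \<theta>"
proof -
  have "trig K (\<lambda>j. if j \<in> J then d j else 0) \<theta> = (\<Sum>j\<in>K. if j \<in> J then d j * ecis j \<theta> else 0)"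
    unfolding trig_def by (rule sum.cong) auto
  also have "\<dots> = (\<Sum>j\<in>K \<inter> J. d j * ecis j \<theta>)"
    using assms by (simp add: sum.inter_restrict)
  also have "K \<inter> J = J" using assms by auto
  finally show ?thesis unfolding trig_def by simp
qed

lemma ecis_add: "ecis i \<theta> * ecis j \<theta> = ecis (i + j) \<theta>"
  unfolding ecis_def by (simp add: cis_mult algebra_simps)

lemma ecis_0 [simp]: "ecis 0 \<theta> = 1"
  unfolding ecis_def by simp

lemma is_trig_const: "is_trig (\<lambda>\<theta>. c)"
  unfolding is_trig_def
  by (rule exI[of _ "{0}"], rule exI[of _ "\<lambda>_. c"]) (simp add: trig_def)

lemma is_trig_add:
  assumes "is_trig f" "is_trig g"
  shows "is_trig (\<lambda>\<theta>. f \<theta> + g \<theta>)"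
proof -
  obtain J c where J: "finite J" "\<And>\<theta>. f \<theta> = trig J c \<theta>" using assms(1) unfolding is_trig_def by blast
  obtain K d where K: "finite K" "\<And>\<theta>. g \<theta> = trig K d \<theta>" using assms(2) unfolding is_trig_def by blast
  let ?c = "\<lambda>j. if j \<in> J then c j else 0"
  let ?d = "\<lambda>j. if j \<in> K then d j else 0"
  have "f \<theta> + g \<theta> = trig (J \<union> K) (\<lambda>j. ?c j + ?d j) \<theta>" for \<theta>
  proof -
    have "f \<theta> + g \<theta> = trig (J \<union> K) ?c \<theta> + trig (J \<union> K) ?d \<theta>"
      using J K by (simp add: trig_extend[of "J \<union> K" J] trig_extend[of "J \<union> K" K])
    also have "\<dots> = trig (J \<union> K) (\<lambda>j. ?c j + ?d j) \<theta>"
      unfolding trig_def by (simp add: sum.distrib distrib_right)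
    finally show ?thesis .
  qed
  then show ?thesis unfolding is_trig_def using J K by blast
qed

lemma is_trig_mult:
  assumes "is_trig f" "is_trig g"
  shows "is_trig (\<lambda>\<theta>. f \<theta> * g \<theta>)"
proof -
  obtain J c where J: "finite J" "\<And>\<theta>. f \<theta> = trig J c \<theta>" using assms(1) unfolding is_trig_def by blast
  obtain K d where K: "finite K" "\<And>\<theta>. g \<theta> = trig K d \<theta>" using assms(2) unfolding is_trig_def by blast
  define s where "s = (\<lambda>p::int\<times>int. fst p + snd p)"
  define L where "L = s ` (J \<times> K)"
  define e where "e = (\<lambda>m. \<Sum>p\<in>{p\<in>J \<times> K. s p = m}. c (fst p) * d (snd p))"
  have fL: "finite L" unfolding L_def using J K by simp
  have "f \<theta> * g \<theta> = trig L e \<theta>" for \<theta>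
  proof -
    have "f \<theta> * g \<theta> = (\<Sum>i\<in>J. \<Sum>j\<in>K. (c i * ecis i \<theta>) * (d j * ecis j \<theta>))"
      using J K unfolding trig_def by (simp add: sum_product)
    also have "\<dots> = (\<Sum>p\<in>J \<times> K. c (fst p) * d (snd p) * ecis (s p) \<theta>)"
      unfolding sum.cartesian_product s_def
      by (intro sum.cong refl) (auto simp: ecis_add[symmetric] algebra_simps)
    also have "\<dots> = (\<Sum>m\<in>L. \<Sum>p\<in>{p\<in>J \<times> K. s p = m}. c (fst p) * d (snd p) * ecis (s p) \<theta>)"
      using J K fL by (intro sum.group[symmetric]) (auto simp: L_def)
    also have "\<dots> = (\<Sum>m\<in>L. e m * ecis m \<theta>)"
      unfolding e_def sum_distrib_right by (intro sum.cong refl) auto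
    finally show ?thesis unfolding trig_def .
  qed
  then show ?thesis unfolding is_trig_def using fL by blast
qed

lemma is_trig_cos: "is_trig (\<lambda>\<theta>. of_real (cos \<theta>))"
proof -
  have "of_real (cos \<theta>) = trig {-1, 1} (\<lambda>_. 1/2) \<theta>" for \<theta>
    unfolding trig_def ecis_def by (simp add: cis.ctr complex_eq_iff)
  then show ?thesis unfolding is_trig_def by (intro exI[of _ "{-1,1}"] exI[of _ "\<lambda>_. 1/2"]) auto
qed

lemma is_trig_sin: "is_trig (\<lambda>\<theta>. of_real (sin \<theta>))"
proof -
  have "of_real (sin \<theta>) = trig {-1, 1} (\<lambda>j. - \<i> * of_int j / 2) \<theta>" for \<theta>
    unfolding trig_def ecis_def by (simp add: cis.ctr complex_eq_iff)
  then show ?thesis unfolding is_trig_def by (intro exI[of _ "{-1,1}"] exI[of _ "\<lambda>j. - \<i> * of_int j / 2"]) auto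
qed

lemma rpf_trig:
  assumes "real_polynomial_function g"
  shows "is_trig (\<lambda>\<theta>. complex_of_real (g (cis \<theta>)))"
  using assms
proof (induction rule: real_polynomial_function.induct)
  case (linear f)
  have "f (cis \<theta>) = cos \<theta> * f 1 + sin \<theta> * f \<i>" for \<theta>
  proof -
    have lin: "linear f" using linear by (rule bounded_linear.linear)
    have "cis \<theta> = cos \<theta> *\<^sub>R 1 + sin \<theta> *\<^sub>R \<i>" by (simp add: complex_eq_iff)
    then have "f (cis \<theta>) = cos \<theta> *\<^sub>R f 1 + sin \<theta> *\<^sub>R f \<i>"
      by (simp only: linear_add[OF lin] linear_scale[OF lin])
    then show ?thesis by simp
  qed
  then have "(\<lambda>\<theta>. complex_of_real (f (cis \<theta>))) =
     (\<lambda>\<theta>. of_real (cos \<theta>) * of_real (f 1) + of_real (sin \<theta>) * of_real (f \<i>))" by auto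
  then show ?case
    by (simp add: is_trig_add is_trig_mult is_trig_cos is_trig_sin is_trig_const)
next
  case (const c)
  then show ?case by (simp add: is_trig_const)
next
  case (add f g)
  then show ?case using is_trig_add by simp
next
  case (mult f g)
  then show ?case using is_trig_mult by simp
qed

lemma V_circle_cont:
  fixes V :: "real \<Rightarrow> real"
  assumes cont: "continuous_on UNIV V" and per: "\<forall>x. V (x + 2*pi) = V x"
  shows "continuous_on (sphere 0 1) (\<lambda>z. V (Arg z))"
proof -
  have contV: "isCont V x" for x using cont by (simp add: continuous_on_eq_continuous_at)
  have FG: "V (Arg z) = V (Arg (-z) + pi)" if "z \<noteq> 0" for z
  proof (cases "Arg z \<le> 0")
    case True
    then have "Arg (-z) + pi = Arg z + 2 * pi" using Arg_minus[OF that] by simp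
    then show ?thesis using per[rule_format, of "Arg z"] by (simp add: add.commute)
  next
    case False
    then show ?thesis using Arg_minus[OF that] by simp
  qed
  show ?thesis unfolding continuous_on_eq_continuous_within
  proof
    fix z :: complex assume z: "z \<in> sphere 0 1"
    then have z0: "z \<noteq> 0" by auto
    show "continuous (at z within sphere 0 1) (\<lambda>z. V (Arg z))"
    proof (cases "z \<in> \<real>\<^sub>\<le>\<^sub>0")
      case False
      then have "continuous (at z) (\<lambda>z. V (Arg z))"
        using continuous_at_compose[of z Arg V, OF continuous_at_Arg[OF False]] contV
        by (simp add: o_def)
      then show ?thesis using continuous_at_imp_continuous_within by blast
    next
      case True
      have "- z \<notin> \<real>\<^sub>\<le>\<^sub>0"
        using True z0 by (auto simp: complex_nonpos_Reals_iff complex_eq_iff)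
      then have c1: "continuous (at (-z)) Arg" by (rule continuous_at_Arg)
      have "continuous (at z) (\<lambda>w. V (Arg (-w) + pi))"
      proof -
        have "continuous (at z) (\<lambda>w. Arg (-w) + pi)"
          using continuous_at_compose[of z uminus Arg] c1
          by (intro continuous_intros) (auto simp: o_def)
        then show ?thesis
          using continuous_at_compose[of z "\<lambda>w. Arg (-w) + pi" V] contV by (simp add: o_def)
      qed
      then have "continuous (at z within sphere 0 1) (\<lambda>w. V (Arg (-w) + pi))"
        using continuous_at_imp_continuous_within by blast
      then show ?thesis
      proof (rule continuous_transform_within[where \<delta> = 1])
        fix x' :: complex assume "x' \<in> sphere 0 1" "dist x' z < 1"
        then have "x' \<noteq> 0" by auto
        then show "V (Arg (- x') + pi) = V (Arg x')" using FG by metis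
      qed (use z in auto)
    qed
  qed
qed

lemma V_approx:
  fixes V :: "real \<Rightarrow> real"
  assumes cont: "continuous_on UNIV V" and per: "\<forall>x. V (x + 2*pi) = V x" and e: "e > 0"
  shows "\<exists>J d. finite J \<and> (\<forall>\<theta>\<in>{-pi..pi}. cmod (of_real (V \<theta>) - trig J d \<theta>) \<le> e)"
proof -
  define F where "F = (\<lambda>z. V (Arg z))"
  have contF: "continuous_on (sphere 0 1) F"
    unfolding F_def using V_circle_cont[OF cont per] .
  have "\<exists>g. real_polynomial_function g \<and> (\<forall>x \<in> sphere 0 1. \<bar>F x - g x\<bar> < e)"
  proof (rule Stone_Weierstrass_HOL[OF compact_sphere _ _ _ _ _ contF e])
    show "\<And>f. real_polynomial_function f \<Longrightarrow> continuous_on (sphere 0 1) f"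
      by (simp add: continuous_at_imp_continuous_on continuous_real_polymonial_function)
    show "\<And>x y. x \<in> sphere 0 (1::real) \<and> y \<in> sphere 0 1 \<and> x \<noteq> y \<Longrightarrow>
          \<exists>f::complex\<Rightarrow>real. real_polynomial_function f \<and> f x \<noteq> f y"
    proof -
      fix x y :: complex assume "x \<in> sphere 0 1 \<and> y \<in> sphere 0 1 \<and> x \<noteq> y"
      then have "Re x \<noteq> Re y \<or> Im x \<noteq> Im y" by (auto simp: complex_eq_iff)
      then show "\<exists>f::complex\<Rightarrow>real. real_polynomial_function f \<and> f x \<noteq> f y"
        using real_polynomial_function.intros(1)[OF bounded_linear_Re]
              real_polynomial_function.intros(1)[OF bounded_linear_Im] by blast
    qed
  qed auto
  then obtain g where g: "real_polynomial_function g" "\<forall>x \<in> sphere 0 1. \<bar>F x - g x\<bar> < e"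
    by blast
  obtain J d where Jd: "finite J" "\<And>\<theta>. complex_of_real (g (cis \<theta>)) = trig J d \<theta>"
    using rpf_trig[OF g(1)] unfolding is_trig_def by blast
  have "cmod (of_real (V \<theta>) - trig J d \<theta>) \<le> e" if th: "\<theta> \<in> {-pi..pi}" for \<theta>
  proof -
    have VF: "V \<theta> = F (cis \<theta>)"
    proof (cases "\<theta> = -pi")
      case True
      have "V (-pi) = V pi" using per[rule_format, of "-pi"] by simp
      have "cis (-pi) = -1" by (simp add: complex_eq_iff)
      have "Arg (-1) = pi" using Arg_cis[of pi] by simp
      show ?thesis unfolding F_def True by (subst \<open>cis (-pi) = -1\<close>) (simp only: \<open>Arg (-1) = pi\<close> \<open>V (-pi) = V pi\<close>)
    next
      case False
      then have "\<theta> \<in> {-pi<..pi}" using th by auto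
      then show ?thesis unfolding F_def by (simp add: Arg_cis)
    qed
    have "cis \<theta> \<in> sphere 0 1" by simp
    then have "\<bar>F (cis \<theta>) - g (cis \<theta>)\<bar> < e" using g(2) by blast
    then have "cmod (of_real (V \<theta> - g (cis \<theta>))) \<le> e" using VF by (simp only: norm_of_real)
    then show ?thesis using Jd(2)[of \<theta>] by simp
  qed
  then show ?thesis using Jd(1) by blast
qed

lemma fourier_complete:
  fixes V :: "real \<Rightarrow> real"
  assumes cont: "continuous_on UNIV V" and per: "\<forall>x. V (x + 2*pi) = V x" and e: "e > 0"
  shows "\<exists>M0. \<forall>M\<ge>M0. nrm (\<lambda>\<theta>. of_real (V \<theta>) - trig {-M..M} (fc (\<lambda>\<theta>. of_real (V \<theta>))) \<theta>) \<le> e"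
proof -
  define f where "f = (\<lambda>\<theta>. complex_of_real (V \<theta>))"
  have CCf: "CC f" unfolding f_def
    by (intro continuous_intros continuous_on_subset[OF cont]) auto
  define e' where "e' = sqrt (e / (2 * pi))"
  have e'0: "e' > 0" unfolding e'_def using e by simp
  have e'2: "2 * pi * e'\<^sup>2 = e" unfolding e'_def using e by simp
  obtain J d where Jd: "finite J" "\<forall>\<theta>\<in>{-pi..pi}. cmod (of_real (V \<theta>) - trig J d \<theta>) \<le> e'"
    using V_approx[OF cont per e'0] by blast
  define M0 where "M0 = (\<Sum>j\<in>J. \<bar>j\<bar>)"
  have "nrm (\<lambda>\<theta>. f \<theta> - trig {-M..M} (fc f) \<theta>) \<le> e" if M: "M \<ge> M0" for M
  proof -
    have sub: "J \<subseteq> {-M..M}"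
    proof
      fix j assume "j \<in> J"
      then have "\<bar>j\<bar> \<le> M0" unfolding M0_def using Jd(1)
        by (intro member_le_sum) auto
      then show "j \<in> {-M..M}" using M by auto
    qed
    define d' where "d' = (\<lambda>j. if j \<in> J then d j else 0)"
    have tr: "trig J d \<theta> = trig {-M..M} d' \<theta>" for \<theta>
      unfolding d'_def by (rule trig_extend[OF _ sub]) simp
    have "nrm (\<lambda>\<theta>. f \<theta> - trig {-M..M} (fc f) \<theta>) \<le> nrm (\<lambda>\<theta>. f \<theta> - trig {-M..M} d' \<theta>)"
      using best_approx[OF CCf, of "{-M..M}" d'] by (simp add: sum_nonneg)
    also have "\<dots> = integral {-pi..pi} (\<lambda>\<theta>. (cmod (f \<theta> - trig J d \<theta>))\<^sup>2)"
      using CCf by (subst nrm_eq) (auto intro!: continuous_intros simp: tr)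
    also have "\<dots> \<le> integral {-pi..pi} (\<lambda>\<theta>. e'\<^sup>2)"
    proof (rule integral_le)
      show "(\<lambda>\<theta>. (cmod (f \<theta> - trig J d \<theta>))\<^sup>2) integrable_on {-pi..pi}"
        using CCf by (intro integrable_continuous_interval continuous_intros) auto
      show "(\<lambda>\<theta>. e'\<^sup>2) integrable_on {-pi..pi}" by (intro integrable_continuous_interval continuous_intros)
      fix \<theta> assume "\<theta> \<in> {-pi..pi}"
      then show "(cmod (f \<theta> - trig J d \<theta>))\<^sup>2 \<le> e'\<^sup>2"
        using Jd(2) unfolding f_def by (intro power_mono) auto
    qed
    also have "\<dots> = e" using e'2 by simp
    finally show ?thesis .
  qed
  then show ?thesis unfolding f_def by blast
qed

lemma fourier_tail:
  fixes V :: "real \<Rightarrow> real" and N :: int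
  assumes cont: "continuous_on UNIV V" and per: "\<forall>x. V (x + 2*pi) = V x" and N: "N \<ge> 0"
    and B: "\<And>M. (\<Sum>j\<in>{-M..M}. real_of_int \<bar>j\<bar> ^ (2*k) * (cmod (fc (\<lambda>\<theta>. of_real (V \<theta>)) j))\<^sup>2) \<le> B"
  shows "nrm (\<lambda>\<theta>. of_real (V \<theta>) - trig {-N..N} (fc (\<lambda>\<theta>. of_real (V \<theta>))) \<theta>) \<le> 2 * pi * B / (of_int N + 1) ^ (2*k)"
proof -
  define f where "f = (\<lambda>\<theta>. complex_of_real (V \<theta>))"
  have CCf: "CC f" unfolding f_def
    by (intro continuous_intros continuous_on_subset[OF cont]) auto
  define q where "q = (of_int N + 1 :: real) ^ (2*k)"
  have q0: "q > 0" unfolding q_def using N by simp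
  have "nrm (\<lambda>\<theta>. f \<theta> - trig {-N..N} (fc f) \<theta>) \<le> 2 * pi * B / q"
  proof (rule field_le_epsilon)
    fix e :: real assume e: "e > 0"
    obtain M0 where M0: "\<And>M. M \<ge> M0 \<Longrightarrow> nrm (\<lambda>\<theta>. f \<theta> - trig {-M..M} (fc f) \<theta>) \<le> e"
      using fourier_complete[OF cont per e] unfolding f_def by blast
    define M where "M = max M0 N"
    have MN: "N \<le> M" "M0 \<le> M" unfolding M_def by auto
    define d where "d = (\<lambda>j. if j \<in> {-N..N} then fc f j else 0)"
    have sub: "{-N..N} \<subseteq> {-M..M}" using MN by auto
    have tr: "trig {-N..N} (fc f) \<theta> = trig {-M..M} d \<theta>" for \<theta>
      unfolding d_def by (rule trig_extend[OF _ sub]) simp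
    have "nrm (\<lambda>\<theta>. f \<theta> - trig {-N..N} (fc f) \<theta>) = nrm (\<lambda>\<theta>. f \<theta> - trig {-M..M} d \<theta>)"
      by (simp add: tr)
    also have "\<dots> = nrm (\<lambda>\<theta>. f \<theta> - trig {-M..M} (fc f) \<theta>) + 2 * pi * (\<Sum>j\<in>{-M..M}. (cmod (fc f j - d j))\<^sup>2)"
      by (rule best_approx[OF CCf]) simp
    also have "(\<Sum>j\<in>{-M..M}. (cmod (fc f j - d j))\<^sup>2) = (\<Sum>j\<in>{-M..M} - {-N..N}. (cmod (fc f j))\<^sup>2)"
      by (rule sum.mono_neutral_cong_right) (auto simp: d_def)
    also have "(\<Sum>j\<in>{-M..M} - {-N..N}. (cmod (fc f j))\<^sup>2) \<le> (\<Sum>j\<in>{-M..M} - {-N..N}. real_of_int \<bar>j\<bar> ^ (2*k) * (cmod (fc f j))\<^sup>2 / q)"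
    proof (rule sum_mono)
      fix j assume j: "j \<in> {-M..M} - {-N..N}"
      then have "of_int N + 1 \<le> real_of_int \<bar>j\<bar>" by auto
      then have "q \<le> real_of_int \<bar>j\<bar> ^ (2*k)" unfolding q_def using N by (intro power_mono) auto
      then have "1 * (cmod (fc f j))\<^sup>2 \<le> (real_of_int \<bar>j\<bar> ^ (2*k) / q) * (cmod (fc f j))\<^sup>2"
        using q0 by (intro mult_right_mono) auto
      then show "(cmod (fc f j))\<^sup>2 \<le> real_of_int \<bar>j\<bar> ^ (2*k) * (cmod (fc f j))\<^sup>2 / q" by simp
    qed
    also have "\<dots> = (\<Sum>j\<in>{-M..M} - {-N..N}. real_of_int \<bar>j\<bar> ^ (2*k) * (cmod (fc f j))\<^sup>2) / q"
      by (simp add: sum_divide_distrib)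
    also have "\<dots> \<le> (\<Sum>j\<in>{-M..M}. real_of_int \<bar>j\<bar> ^ (2*k) * (cmod (fc f j))\<^sup>2) / q"
      using q0 by (intro divide_right_mono sum_mono2) auto
    also have "\<dots> \<le> B / q" using q0 B[of M] unfolding f_def by (intro divide_right_mono) auto
    finally have "nrm (\<lambda>\<theta>. f \<theta> - trig {-N..N} (fc f) \<theta>) \<le> nrm (\<lambda>\<theta>. f \<theta> - trig {-M..M} (fc f) \<theta>) + 2 * pi * (B / q)"
      by simp
    then show "nrm (\<lambda>\<theta>. f \<theta> - trig {-N..N} (fc f) \<theta>) \<le> 2 * pi * B / q + e"
      using M0[OF MN(2)] by simp
  qed
  then show ?thesis unfolding f_def q_def by simp
qed



lemma per_integral_shift:
  fixes g :: "real \<Rightarrow> complex"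
  assumes cont: "continuous_on UNIV g" and per: "\<And>x. g (x + 2*pi) = g x"
    and h: "0 \<le> h" "h \<le> 2*pi"
  shows "integral {-pi..pi} (\<lambda>\<theta>. g (\<theta> + h)) = integral {-pi..pi} g"
proof -
  have int: "g integrable_on {a..b}" for a b
    by (intro integrable_continuous_interval continuous_on_subset[OF cont]) auto
  have 1: "integral {-pi..pi} (\<lambda>\<theta>. g (\<theta> + h)) = integral {-pi+h..pi+h} g"
    using integral_shift_real_ivl[of "-pi+h" h "pi+h" g] by simp
  have 2: "integral {-pi+h..pi} g + integral {pi..pi+h} g = integral {-pi+h..pi+h} g"
    using h by (intro Henstock_Kurzweil_Integration.integral_combine int) auto
  have 3: "integral {pi..pi+h} g = integral {-pi..-pi+h} g"
  proof -
    have "integral {pi - 2*pi..pi+h - 2*pi} (\<lambda>x. g (x + 2*pi)) = integral {pi..pi+h} g"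
      by (rule integral_shift_real_ivl)
    then show ?thesis using per by simp
  qed
  have 4: "integral {-pi..-pi+h} g + integral {-pi+h..pi} g = integral {-pi..pi} g"
    using h by (intro Henstock_Kurzweil_Integration.integral_combine int) auto
  show ?thesis using 1 2 3 4 by (simp add: add.commute)
qed

lemma D_cont:
  fixes D :: "nat \<Rightarrow> real \<Rightarrow> real"
  assumes Dder: "\<forall>j<k-1. \<forall>x. (D j has_real_derivative D (Suc j) x) (at x)"
    and Lip: "\<forall>x y. \<bar>D (k-1) x - D (k-1) y\<bar> \<le> L * \<bar>x - y\<bar>" and r: "r \<le> k-1"
  shows "continuous_on UNIV (D r)"
proof (cases "r < k-1")
  case True
  then show ?thesis using Dder
    by (intro continuous_at_imp_continuous_on) (auto intro: DERIV_isCont)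
next
  case False
  then have rk: "r = k-1" using r by simp
  have "\<bar>D (k-1) 1 - D (k-1) 0\<bar> \<le> L" using Lip[rule_format, of 1 0] by simp
  then have L0: "0 \<le> L" by (meson abs_ge_zero order_trans)
  have "lipschitz_on L UNIV (D r)"
    unfolding lipschitz_on_def using L0 Lip rk by (auto simp: dist_real_def)
  then show ?thesis by (rule lipschitz_on_continuous_on)
qed

lemma D_per:
  fixes D :: "nat \<Rightarrow> real \<Rightarrow> real"
  assumes Dder: "\<forall>j<k-1. \<forall>x. (D j has_real_derivative D (Suc j) x) (at x)"
    and per: "\<forall>x. D 0 (x + 2*pi) = D 0 x"
  shows "r \<le> k-1 \<Longrightarrow> \<forall>x. D r (x + 2*pi) = D r x"
proof (induction r)
  case 0
  then show ?case using per by simp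
next
  case (Suc r)
  then have IH: "\<forall>x. D r (x + 2*pi) = D r x" and rk: "r < k-1" by auto
  show ?case
  proof
    fix x
    have d1: "(D r has_real_derivative D (Suc r) x) (at x)" using Dder rk by auto
    have "(D r has_real_derivative D (Suc r) (x + 2*pi)) (at (x + 2*pi))" using Dder rk by auto
    then have "((\<lambda>y. D r (y + 2*pi)) has_real_derivative D (Suc r) (x + 2*pi)) (at x)"
      by (simp add: DERIV_shift)
    then have "(D r has_real_derivative D (Suc r) (x + 2*pi)) (at x)" using IH by simp
    then show "D (Suc r) (x + 2*pi) = D (Suc r) x" using d1 by (rule DERIV_unique)
  qed
qed

lemma ecis_pi: "ecis j pi = ecis j (-pi)"
proof -
  have "cis (of_int j * pi) = cis (of_int j * (-pi)) * cis (2 * pi * of_int j)"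
    by (simp add: cis_mult algebra_simps)
  then show ?thesis unfolding ecis_def by simp
qed

lemma ecis_per: "ecis j (t + 2*pi) = ecis j t"
proof -
  have "cis (of_int j * (t + 2*pi)) = cis (of_int j * t) * cis (2 * pi * of_int j)"
    by (simp add: cis_mult algebra_simps)
  then show ?thesis unfolding ecis_def by simp
qed

lemma cnj_ecis: "cnj (ecis j \<theta>) = cis ((- of_int j) * \<theta>)"
  unfolding ecis_def by (simp add: cis_cnj)

lemma ip_ofreal: "ip (\<lambda>\<theta>. complex_of_real (f \<theta>)) (ecis j) = integral {-pi..pi} (\<lambda>\<theta>. f \<theta> *\<^sub>R cis ((- of_int j) * \<theta>))"
  unfolding ip_def cnj_ecis by (simp add: scaleR_conv_of_real)

lemma ibp_ip:
  fixes f f' :: "real \<Rightarrow> real"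
  assumes der: "\<And>x. (f has_real_derivative f' x) (at x)" and cf': "continuous_on UNIV f'"
    and fp: "f pi = f (-pi)"
  shows "ip (\<lambda>\<theta>. complex_of_real (f' \<theta>)) (ecis j) = \<i> * of_int j * ip (\<lambda>\<theta>. complex_of_real (f \<theta>)) (ecis j)"
proof -
  define c where "c = - real_of_int j"
  define G where "G = (\<lambda>\<theta>. f \<theta> *\<^sub>R cis (c * \<theta>))"
  have cf: "continuous_on UNIV f"
    by (intro continuous_at_imp_continuous_on) (auto intro: DERIV_isCont der)
  have "((\<lambda>\<theta>. f \<theta> *\<^sub>R (\<i> * of_real c * cis (c * \<theta>)) + f' \<theta> *\<^sub>R cis (c * \<theta>)) has_integral (G pi - G (-pi))) {-pi..pi}"
  proof (rule fundamental_theorem_of_calculus)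
    fix x assume "x \<in> {-pi..pi}"
    show "(G has_vector_derivative (f x *\<^sub>R (\<i> * of_real c * cis (c * x)) + f' x *\<^sub>R cis (c * x))) (at x within {-pi..pi})"
      unfolding G_def
      by (rule has_vector_derivative_scaleR[OF DERIV_subset[OF der] has_vd_cis_lin]) auto
  qed simp
  moreover have "G pi - G (-pi) = 0"
  proof -
    have "cis (c * pi) = cis (c * (-pi))" using ecis_pi[of "-j"] unfolding ecis_def c_def by simp
    then show ?thesis unfolding G_def using fp by simp
  qed
  ultimately have hi: "((\<lambda>\<theta>. f \<theta> *\<^sub>R (\<i> * of_real c * cis (c * \<theta>)) + f' \<theta> *\<^sub>R cis (c * \<theta>)) has_integral 0) {-pi..pi}"
    by simp
  have i1: "(\<lambda>\<theta>. f \<theta> *\<^sub>R (\<i> * of_real c * cis (c * \<theta>))) integrable_on {-pi..pi}"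
    by (intro integrable_continuous_interval continuous_intros continuous_on_subset[OF cf]) auto
  have i2: "(\<lambda>\<theta>. f' \<theta> *\<^sub>R cis (c * \<theta>)) integrable_on {-pi..pi}"
    by (intro integrable_continuous_interval continuous_intros continuous_on_subset[OF cf']) auto
  have "integral {-pi..pi} (\<lambda>\<theta>. f \<theta> *\<^sub>R (\<i> * of_real c * cis (c * \<theta>))) + integral {-pi..pi} (\<lambda>\<theta>. f' \<theta> *\<^sub>R cis (c * \<theta>)) = 0"
    using integral_add[OF i1 i2] integral_unique[OF hi] by simp
  moreover have "integral {-pi..pi} (\<lambda>\<theta>. f \<theta> *\<^sub>R (\<i> * of_real c * cis (c * \<theta>))) = (\<i> * of_real c) * integral {-pi..pi} (\<lambda>\<theta>. f \<theta> *\<^sub>R cis (c * \<theta>))"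
  proof -
    have "(\<lambda>\<theta>. f \<theta> *\<^sub>R (\<i> * of_real c * cis (c * \<theta>))) = (\<lambda>\<theta>. (\<i> * of_real c) * (f \<theta> *\<^sub>R cis (c * \<theta>)))"
      by (rule ext) (simp add: scaleR_conv_of_real algebra_simps)
    then show ?thesis by (simp only: integral_mult_right)
  qed
  ultimately have "integral {-pi..pi} (\<lambda>\<theta>. f' \<theta> *\<^sub>R cis (c * \<theta>)) = - (\<i> * of_real c) * integral {-pi..pi} (\<lambda>\<theta>. f \<theta> *\<^sub>R cis (c * \<theta>))"
    by (simp add: eq_neg_iff_add_eq_0 add.commute)
  then show ?thesis unfolding ip_ofreal c_def by simp
qed

lemma D_fc:
  fixes D :: "nat \<Rightarrow> real \<Rightarrow> real"
  assumes Dder: "\<forall>j<k-1. \<forall>x. (D j has_real_derivative D (Suc j) x) (at x)"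
    and Lip: "\<forall>x y. \<bar>D (k-1) x - D (k-1) y\<bar> \<le> L * \<bar>x - y\<bar>"
    and per: "\<forall>x. D 0 (x + 2*pi) = D 0 x"
  shows "r \<le> k-1 \<Longrightarrow> fc (\<lambda>\<theta>. of_real (D r \<theta>)) j = (\<i> * of_int j) ^ r * fc (\<lambda>\<theta>. of_real (D 0 \<theta>)) j"
proof (induction r)
  case 0
  then show ?case by simp
next
  case (Suc r)
  then have rk: "r < k-1" by simp
  have der: "\<And>x. (D r has_real_derivative D (Suc r) x) (at x)" using Dder rk by auto
  have cont: "continuous_on UNIV (D (Suc r))" using D_cont[OF Dder Lip] Suc.prems by simp
  have per_r: "\<forall>x. D r (x + 2*pi) = D r x" using D_per[OF Dder per, of r] rk by simp
  have "D r (-pi + 2*pi) = D r (-pi)" using per_r[rule_format, of "-pi"] .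
  moreover have "-pi + 2*pi = pi" by simp
  ultimately have fp: "D r pi = D r (-pi)" by metis
  have "fc (\<lambda>\<theta>. of_real (D (Suc r) \<theta>)) j = \<i> * of_int j * fc (\<lambda>\<theta>. of_real (D r \<theta>)) j"
    unfolding fc_def using ibp_ip[OF der cont fp] by simp
  then show ?case using Suc by simp
qed

lemma cis_minus_1_sq: "(cmod (cis x - 1))\<^sup>2 = (2 * sin (x/2))\<^sup>2"
proof -
  have "(cmod (cis x - 1))\<^sup>2 = (cos x - 1)\<^sup>2 + (sin x)\<^sup>2" by (simp add: cmod_power2)
  also have "\<dots> = 2 - 2 * cos x" using sin_cos_squared_add[of x] by (simp add: power2_eq_square algebra_simps)
  also have "cos x = 1 - 2 * sin (x/2) ^ 2" using cos_double_sin[of "x/2"] by simp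
  finally show ?thesis by (simp add: power_mult_distrib)
qed

lemma continuous_on_ecis_UNIV [continuous_intros]: "continuous_on UNIV (ecis j)"
  unfolding ecis_def by (intro continuous_intros)

lemma lim_sin_quot: "((\<lambda>h. 2 * sin (of_int j * h / 2) / h) \<longlongrightarrow> real_of_int j) (at_right 0)"
proof -
  have "((\<lambda>h. 2 * sin (of_int j * h / 2)) has_real_derivative real_of_int j) (at 0)"
    by (auto intro!: derivative_eq_intros)
  then have "((\<lambda>h. (2 * sin (of_int j * h / 2) - 2 * sin (of_int j * 0 / 2)) / (h - 0)) \<longlongrightarrow> real_of_int j) (at 0)"
    by (simp only: has_field_derivative_iff)
  then have "((\<lambda>h. 2 * sin (of_int j * h / 2) / h) \<longlongrightarrow> real_of_int j) (at 0)" by simp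
  then show ?thesis by (rule tendsto_mono[OF at_le, rotated]) simp
qed

lemma lip_bessel:
  fixes g :: "real \<Rightarrow> real" and J :: "int set"
  assumes cont: "continuous_on UNIV g" and per: "\<forall>x. g (x + 2*pi) = g x"
    and Lip: "\<forall>x y. \<bar>g x - g y\<bar> \<le> L * \<bar>x - y\<bar>" and J: "finite J"
  shows "(\<Sum>j\<in>J. (real_of_int j)\<^sup>2 * (cmod (fc (\<lambda>\<theta>. of_real (g \<theta>)) j))\<^sup>2) \<le> L\<^sup>2"
proof -
  define G where "G = (\<lambda>\<theta>. complex_of_real (g \<theta>))"
  have cG: "continuous_on UNIV G" unfolding G_def by (intro continuous_intros cont)
  have CCG: "CC G" using cG continuous_on_subset by blast
  define c where "c = fc G"
  have key: "(\<Sum>j\<in>J. (2 * sin (of_int j * h / 2) / h)\<^sup>2 * (cmod (c j))\<^sup>2) \<le> L\<^sup>2"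
    if h: "0 < h" "h \<le> 2*pi" for h
  proof -
    define dh where "dh = (\<lambda>\<theta>. G (\<theta> + h) - G \<theta>)"
    have cGh: "continuous_on UNIV (\<lambda>\<theta>. G (\<theta> + h))"
      by (intro continuous_on_compose2[OF cG] continuous_intros) auto
    have CCdh: "CC dh" unfolding dh_def
      by (intro continuous_intros continuous_on_subset[OF cGh] continuous_on_subset[OF cG]) auto
    have fcdh: "fc dh j = (ecis j h - 1) * c j" for j
    proof -
      define \<Phi> where "\<Phi> = (\<lambda>t. G t * cnj (ecis j t))"
      have c\<Phi>: "continuous_on UNIV \<Phi>" unfolding \<Phi>_def by (intro continuous_intros cG)
      have p\<Phi>: "\<Phi> (x + 2*pi) = \<Phi> x" for x unfolding \<Phi>_def G_def using per ecis_per by simp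
      have e1: "G (\<theta> + h) * cnj (ecis j \<theta>) = ecis j h * \<Phi> (\<theta> + h)" for \<theta>
        unfolding \<Phi>_def by (simp add: ecis_def cis_cnj cis_mult algebra_simps)
      have "ip (\<lambda>\<theta>. G (\<theta> + h)) (ecis j) = integral {-pi..pi} (\<lambda>\<theta>. ecis j h * \<Phi> (\<theta> + h))"
        unfolding ip_def e1 ..
      also have "\<dots> = ecis j h * integral {-pi..pi} (\<lambda>\<theta>. \<Phi> (\<theta> + h))"
        by (rule integral_mult_right)
      also have "integral {-pi..pi} (\<lambda>\<theta>. \<Phi> (\<theta> + h)) = integral {-pi..pi} \<Phi>"
        by (rule per_integral_shift[OF c\<Phi> p\<Phi>]) (use h in auto)
      also have "integral {-pi..pi} \<Phi> = ip G (ecis j)" unfolding \<Phi>_def ip_def ..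
      finally have "ip (\<lambda>\<theta>. G (\<theta> + h)) (ecis j) = ecis j h * ip G (ecis j)" .
      then have "ip dh (ecis j) = (ecis j h - 1) * ip G (ecis j)"
        unfolding dh_def
        by (subst ip_diff_left) (auto intro: continuous_on_subset[OF cGh] CCG simp: algebra_simps)
      then show ?thesis unfolding fc_def c_def by simp
    qed
    have "2*pi * (\<Sum>j\<in>J. (cmod (fc dh j))\<^sup>2) \<le> nrm dh" by (rule bessel_le[OF CCdh J])
    also have "nrm dh \<le> integral {-pi..pi} (\<lambda>\<theta>. (L*h)\<^sup>2)"
      unfolding nrm_eq[OF CCdh]
    proof (rule integral_le)
      show "(\<lambda>\<theta>. (cmod (dh \<theta>))\<^sup>2) integrable_on {-pi..pi}"
        using CCdh by (intro integrable_continuous_interval continuous_intros) auto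
      show "(\<lambda>\<theta>. (L*h)\<^sup>2) integrable_on {-pi..pi}" by (intro integrable_continuous_interval continuous_intros)
      fix \<theta> :: real
      have "cmod (dh \<theta>) = \<bar>g (\<theta> + h) - g \<theta>\<bar>" unfolding dh_def G_def
        by (simp only: of_real_diff[symmetric] norm_of_real)
      also have "\<dots> \<le> L * h" using Lip[rule_format, of "\<theta> + h" \<theta>] h by simp
      finally show "(cmod (dh \<theta>))\<^sup>2 \<le> (L*h)\<^sup>2" by (intro power_mono) auto
    qed
    also have "\<dots> = 2*pi * (L*h)\<^sup>2" by simp
    finally have S: "(\<Sum>j\<in>J. (cmod (fc dh j))\<^sup>2) \<le> (L*h)\<^sup>2" by simp
    have "(\<Sum>j\<in>J. (2 * sin (of_int j * h / 2) / h)\<^sup>2 * (cmod (c j))\<^sup>2)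
        = (\<Sum>j\<in>J. (cmod (fc dh j))\<^sup>2) / h\<^sup>2"
      unfolding sum_divide_distrib
    proof (intro sum.cong refl)
      fix j
      have "(cmod (fc dh j))\<^sup>2 = (cmod (ecis j h - 1))\<^sup>2 * (cmod (c j))\<^sup>2"
        by (simp add: fcdh norm_mult power_mult_distrib)
      also have "(cmod (ecis j h - 1))\<^sup>2 = (2 * sin (of_int j * h / 2))\<^sup>2"
        unfolding ecis_def cis_minus_1_sq by simp
      finally show "(2 * sin (of_int j * h / 2) / h)\<^sup>2 * (cmod (c j))\<^sup>2 = (cmod (fc dh j))\<^sup>2 / h\<^sup>2"
        by (simp add: power_divide)
    qed
    also have "\<dots> \<le> (L*h)\<^sup>2 / h\<^sup>2" using S h by (intro divide_right_mono) auto
    also have "\<dots> = L\<^sup>2" using h by (simp add: power_mult_distrib)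
    finally show ?thesis .
  qed
  have lim: "((\<lambda>h. \<Sum>j\<in>J. (2 * sin (of_int j * h / 2) / h)\<^sup>2 * (cmod (c j))\<^sup>2)
      \<longlongrightarrow> (\<Sum>j\<in>J. (real_of_int j)\<^sup>2 * (cmod (c j))\<^sup>2)) (at_right 0)"
    by (intro tendsto_intros lim_sin_quot)
  have ev: "eventually (\<lambda>h. (\<Sum>j\<in>J. (2 * sin (of_int j * h / 2) / h)\<^sup>2 * (cmod (c j))\<^sup>2) \<le> L\<^sup>2) (at_right 0)"
  proof -
    have "eventually (\<lambda>x. x \<in> {0<..<2*pi}) (at_right (0::real))"
      by (rule eventually_at_right_real) simp
    then show ?thesis by eventually_elim (auto intro: key)
  qed
  show ?thesis
    using tendsto_le[OF trivial_limit_at_right_real tendsto_const lim ev] unfolding c_def G_def .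
qed

lemma V_decay:
  fixes D :: "nat \<Rightarrow> real \<Rightarrow> real" and V :: "real \<Rightarrow> real" and M :: int
  assumes k: "k \<ge> 1" and per: "\<forall>x. V (x + 2*pi) = V x" and D0: "D 0 = V"
    and Dder: "\<forall>j<k-1. \<forall>x. (D j has_real_derivative D (Suc j) x) (at x)"
    and Lip: "\<forall>x y. \<bar>D (k-1) x - D (k-1) y\<bar> \<le> L * \<bar>x - y\<bar>"
  shows "(\<Sum>j\<in>{-M..M}. real_of_int \<bar>j\<bar> ^ (2*k) * (cmod (fc (\<lambda>\<theta>. of_real (V \<theta>)) j))\<^sup>2) \<le> L\<^sup>2"
proof -
  have per0: "\<forall>x. D 0 (x + 2*pi) = D 0 x" using per D0 by simp
  have cg: "continuous_on UNIV (D (k-1))" using D_cont[OF Dder Lip] by simp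
  have pg: "\<forall>x. D (k-1) (x + 2*pi) = D (k-1) x" using D_per[OF Dder per0] by simp
  have B: "(\<Sum>j\<in>{-M..M}. (real_of_int j)\<^sup>2 * (cmod (fc (\<lambda>\<theta>. of_real (D (k-1) \<theta>)) j))\<^sup>2) \<le> L\<^sup>2"
    by (rule lip_bessel[OF cg pg Lip]) simp
  have "(real_of_int j)\<^sup>2 * (cmod (fc (\<lambda>\<theta>. of_real (D (k-1) \<theta>)) j))\<^sup>2
      = real_of_int \<bar>j\<bar> ^ (2*k) * (cmod (fc (\<lambda>\<theta>. of_real (V \<theta>)) j))\<^sup>2" for j
  proof -
    have "fc (\<lambda>\<theta>. of_real (D (k-1) \<theta>)) j = (\<i> * of_int j) ^ (k-1) * fc (\<lambda>\<theta>. of_real (V \<theta>)) j"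
      using D_fc[OF Dder Lip per0, of "k-1" j] D0 by simp
    then have "(cmod (fc (\<lambda>\<theta>. of_real (D (k-1) \<theta>)) j))\<^sup>2 = (real_of_int \<bar>j\<bar>) ^ (2*(k-1)) * (cmod (fc (\<lambda>\<theta>. of_real (V \<theta>)) j))\<^sup>2"
      by (simp add: norm_mult norm_power power_mult_distrib power_mult[symmetric] mult.commute[of 2])
    moreover have "(real_of_int j)\<^sup>2 * (real_of_int \<bar>j\<bar>) ^ (2*(k-1)) = real_of_int \<bar>j\<bar> ^ (2*k)"
    proof -
      have "(real_of_int j)\<^sup>2 = (real_of_int \<bar>j\<bar>)^2" by simp
      moreover have "2 + 2*(k-1) = 2*k" using k by simp
      ultimately show ?thesis by (metis power_add)
    qed
    ultimately show ?thesis by (simp add: mult.assoc[symmetric])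
  qed
  then show ?thesis using B by simp
qed



lemma mean_value_entire:
  fixes f :: "complex \<Rightarrow> complex"
  assumes hol: "f holomorphic_on UNIV"
  shows "integral {-pi..pi} (\<lambda>\<theta>. f (cis \<theta>)) = of_real (2 * pi) * f 0"
proof -
  have hf: "f holomorphic_on cball 0 1" using hol holomorphic_on_subset by blast
  have "((\<lambda>u. f u / (u - 0)) has_contour_integral (2 * of_real pi * \<i> * f 0)) (part_circlepath 0 1 0 (2*pi))"
    using Cauchy_integral_circlepath_simple[OF hf, of 0] unfolding circlepath_def by simp
  then have hi: "((\<lambda>t. f (0 + 1 * cis t) / (0 + 1 * cis t - 0) * 1 * \<i> * cis t) has_integral (2 * of_real pi * \<i> * f 0)) {0..2*pi}"
    by (subst (asm) has_contour_integral_part_circlepath_iff) auto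
  have "((\<lambda>t. \<i> * f (cis t)) has_integral (2 * of_real pi * \<i> * f 0)) {0..2*pi}"
    by (rule has_integral_eq[OF _ hi]) (simp_all add: field_simps)
  then have "((\<lambda>t. (- \<i>) * (\<i> * f (cis t))) has_integral (- \<i>) * (2 * of_real pi * \<i> * f 0)) {0..2*pi}"
    by (rule has_integral_mult_right)
  moreover have "- (\<i> * (2 * complex_of_real pi * \<i> * f 0)) = 2 * of_real pi * f 0"
    by (simp add: complex_eq_iff)
  ultimately have h02: "((\<lambda>t. f (cis t)) has_integral (2 * of_real pi * f 0)) {0..2*pi}" by simp
  define F where "F = (\<lambda>\<theta>. f (cis \<theta>))"
  have cF: "continuous_on UNIV F" unfolding F_def
    by (intro continuous_on_compose2[OF holomorphic_on_imp_continuous_on[OF hol]] continuous_intros) auto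
  have pF: "F (x + 2*pi) = F x" for x unfolding F_def by (simp add: cis_mult[symmetric])
  have "integral {-pi..pi} F = integral {-pi..pi} (\<lambda>\<theta>. F (\<theta> + pi))"
    by (rule per_integral_shift[OF cF pF, symmetric]) auto
  also have "\<dots> = integral {-pi + pi..pi + pi} F"
    using integral_shift_real_ivl[of "-pi + pi" pi "pi + pi" F] by simp
  also have "\<dots> = 2 * of_real pi * f 0" using h02 unfolding F_def by (simp add: integral_unique)
  finally show ?thesis unfolding F_def by simp
qed

lemma poly_cis_trig:
  fixes P :: "complex poly"
  assumes "degree P \<le> N"
  shows "poly P (cis \<theta>) = trig (int ` {..N}) (\<lambda>j. coeff P (nat j)) \<theta>"
proof -
  have "poly P (cis \<theta>) = (\<Sum>i\<le>degree P. coeff P i * cis \<theta> ^ i)"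
    by (simp add: poly_altdef)
  also have "\<dots> = (\<Sum>i\<le>N. coeff P i * cis \<theta> ^ i)"
    using assms by (intro sum.mono_neutral_left) (auto simp: coeff_eq_0)
  also have "\<dots> = (\<Sum>i\<le>N. coeff P (nat (int i)) * ecis (int i) \<theta>)"
    unfolding ecis_def Complex.DeMoivre by simp
  also have "\<dots> = trig (int ` {..N}) (\<lambda>j. coeff P (nat j)) \<theta>"
    unfolding trig_def by (subst sum.reindex) (auto simp: inj_on_def)
  finally show ?thesis .
qed

lemma nrm_poly:
  fixes P :: "complex poly"
  assumes "degree P \<le> N"
  shows "nrm (\<lambda>\<theta>. poly P (cis \<theta>)) = 2 * pi * (\<Sum>i\<le>N. (cmod (coeff P i))\<^sup>2)"
proof -
  have "nrm (\<lambda>\<theta>. poly P (cis \<theta>)) = nrm (trig (int ` {..N}) (\<lambda>j. coeff P (nat j)))"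
    using poly_cis_trig[OF assms] by presburger
  also have "\<dots> = 2 * pi * (\<Sum>j\<in>int ` {..N}. (cmod (coeff P (nat j)))\<^sup>2)"
    by (rule nrm_trig) simp
  also have "(\<Sum>j\<in>int ` {..N}. (cmod (coeff P (nat j)))\<^sup>2) = (\<Sum>i\<le>N. (cmod (coeff P i))\<^sup>2)"
    by (subst sum.reindex) (auto simp: inj_on_def)
  finally show ?thesis .
qed



definition Wt :: "nat \<Rightarrow> nat \<Rightarrow> complex poly \<Rightarrow> real" where
  "Wt k N P = L2_set (\<lambda>i. (1 + real i) ^ k * cmod (coeff P i)) {..N}"

definition W :: "nat \<Rightarrow> complex poly \<Rightarrow> real" where
  "W k P = Wt k (degree P) P"

definition At :: "nat \<Rightarrow> complex poly \<Rightarrow> real" where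
  "At N P = (\<Sum>i\<le>N. cmod (coeff P i))"

definition A :: "complex poly \<Rightarrow> real" where
  "A P = At (degree P) P"

lemma Wt_eq: "degree P \<le> N \<Longrightarrow> Wt k N P = W k P"
  unfolding W_def Wt_def L2_set_def
  by (intro arg_cong[where f = sqrt] sum.mono_neutral_right) (auto simp: coeff_eq_0)

lemma At_eq: "degree P \<le> N \<Longrightarrow> At N P = A P"
  unfolding A_def At_def
  by (intro sum.mono_neutral_right) (auto simp: coeff_eq_0)

lemma W_nonneg: "W k P \<ge> 0"
  unfolding W_def Wt_def by simp

lemma A_nonneg: "A P \<ge> 0"
  unfolding A_def At_def by (simp add: sum_nonneg)

lemma W_add: "W k (P + Q) \<le> W k P + W k Q"
proof -
  define N where "N = max (degree P) (degree Q)"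
  have dP: "degree P \<le> N" and dQ: "degree Q \<le> N" and dPQ: "degree (P + Q) \<le> N"
    unfolding N_def by (auto intro: degree_add_le)
  have "Wt k N (P + Q) \<le> L2_set (\<lambda>i. (1 + real i) ^ k * cmod (coeff P i) + (1 + real i) ^ k * cmod (coeff Q i)) {..N}"
    unfolding Wt_def
  proof (rule L2_set_mono)
    fix i
    have "cmod (coeff (P + Q) i) \<le> cmod (coeff P i) + cmod (coeff Q i)"
      by (simp add: norm_triangle_ineq)
    then show "(1 + real i) ^ k * cmod (coeff (P + Q) i) \<le> (1 + real i) ^ k * cmod (coeff P i) + (1 + real i) ^ k * cmod (coeff Q i)"
      by (simp add: distrib_left[symmetric] mult_left_mono)
  qed simp
  also have "\<dots> \<le> Wt k N P + Wt k N Q" unfolding Wt_def by (rule L2_set_triangle_ineq)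
  finally show ?thesis using Wt_eq[OF dP] Wt_eq[OF dQ] Wt_eq[OF dPQ] by simp
qed

lemma W_smult: "W k (smult c P) = cmod c * W k P"
proof -
  have d: "degree (smult c P) \<le> degree P" by (rule degree_smult_le)
  have "Wt k (degree P) (smult c P) = cmod c * Wt k (degree P) P"
    unfolding Wt_def by (subst L2_set_right_distrib) (auto simp: norm_mult algebra_simps)
  then show ?thesis using Wt_eq[OF d] by (simp add: W_def)
qed

lemma W_zero [simp]: "W k 0 = 0"
  unfolding W_def Wt_def by simp

lemma W_one [simp]: "W k 1 = 1"
  unfolding W_def Wt_def by simp

lemma W_sum: "finite S \<Longrightarrow> W k (\<Sum>l\<in>S. F l) \<le> (\<Sum>l\<in>S. W k (F l))"
proof (induction S rule: finite_induct)
  case empty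
  then show ?case by simp
next
  case (insert x S)
  then show ?case using W_add[of k "F x" "sum F S"] by simp
qed

lemma sum_inv_sq: "(\<Sum>i\<le>N. 1 / (1 + real i)\<^sup>2) \<le> 2 - 1 / (1 + real N)"
proof (induction N)
  case 0
  then show ?case by simp
next
  case (Suc N)
  define a where "a = 1 + real N"
  have a0: "a > 0" unfolding a_def by simp
  have "a * (a + 1) \<le> (a + 1) * (a + 1)" using a0 by (intro mult_right_mono) auto
  then have "a * (a + 1) \<le> (a + 1)\<^sup>2" by (simp add: power2_eq_square)
  then have "1 / (a + 1)\<^sup>2 \<le> 1 / (a * (a + 1))"
    using a0 by (intro divide_left_mono) (auto intro: mult_pos_pos simp: add_pos_pos)
  also have "\<dots> = 1 / a - 1 / (a + 1)" using a0 by (simp add: field_simps)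
  finally have "1 / (1 + real (Suc N))\<^sup>2 \<le> 1 / (1 + real N) - 1 / (1 + real (Suc N))"
    unfolding a_def by (simp add: add.commute)
  then show ?case using Suc by simp
qed

lemma A_le_W:
  assumes k: "k \<ge> 1"
  shows "A P \<le> sqrt 2 * W k P"
proof -
  define N where "N = degree P"
  have "A P = (\<Sum>i\<le>N. \<bar>1 / (1 + real i) ^ k\<bar> * \<bar>(1 + real i) ^ k * cmod (coeff P i)\<bar>)"
    unfolding A_def At_def N_def by (intro sum.cong refl) (simp add: field_simps)
  also have "\<dots> \<le> L2_set (\<lambda>i. 1 / (1 + real i) ^ k) {..N} * Wt k N P"
    unfolding Wt_def by (rule L2_set_mult_ineq)
  also have "L2_set (\<lambda>i. 1 / (1 + real i) ^ k) {..N} \<le> sqrt 2"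
  proof -
    have "(\<Sum>i\<le>N. (1 / (1 + real i) ^ k)\<^sup>2) \<le> (\<Sum>i\<le>N. 1 / (1 + real i)\<^sup>2)"
    proof (rule sum_mono)
      fix i
      have "(1 + real i)\<^sup>2 \<le> ((1 + real i) ^ k)\<^sup>2"
        using k by (intro power_mono) (auto intro: power_increasing[of 1 k "1 + real i", simplified])
      then show "(1 / (1 + real i) ^ k)\<^sup>2 \<le> 1 / (1 + real i)\<^sup>2"
        by (simp add: power_divide divide_simps)
    qed
    also have "\<dots> \<le> 2" using sum_inv_sq[of N] by (smt (verit) divide_nonneg_nonneg of_nat_0_le_iff)
    finally show ?thesis unfolding L2_set_def by simp
  qed
  finally show ?thesis
    using W_nonneg[of k P] unfolding W_def N_def
    by (smt (verit) mult_right_mono W_def Wt_def L2_set_nonneg)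
qed

lemma weighted_CS:
  fixes x y :: "'a \<Rightarrow> real"
  assumes "\<And>i. i \<in> I \<Longrightarrow> y i \<ge> 0"
  shows "(\<Sum>i\<in>I. x i * y i)\<^sup>2 \<le> (\<Sum>i\<in>I. (x i)\<^sup>2 * y i) * (\<Sum>i\<in>I. y i)"
proof -
  have "(\<Sum>i\<in>I. x i * y i) = (\<Sum>i\<in>I. (x i * sqrt (y i)) * sqrt (y i))"
    using assms by (intro sum.cong refl) (simp add: mult.assoc)
  then have "(\<Sum>i\<in>I. x i * y i)\<^sup>2 \<le> (\<Sum>i\<in>I. (x i * sqrt (y i))\<^sup>2) * (\<Sum>i\<in>I. (sqrt (y i))\<^sup>2)"
    using Cauchy_Schwarz_ineq_sum[of "\<lambda>i. x i * sqrt (y i)" "\<lambda>i. sqrt (y i)" I] by simp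
  also have "(\<Sum>i\<in>I. (x i * sqrt (y i))\<^sup>2) = (\<Sum>i\<in>I. (x i)\<^sup>2 * y i)"
    using assms by (intro sum.cong refl) (simp add: power_mult_distrib)
  also have "(\<Sum>i\<in>I. (sqrt (y i))\<^sup>2) = (\<Sum>i\<in>I. y i)"
    using assms by (intro sum.cong refl) simp
  finally show ?thesis .
qed

lemma refl_sum_le:
  fixes y :: "nat \<Rightarrow> real"
  assumes "\<And>j. y j \<ge> 0" "m \<le> N"
  shows "(\<Sum>i\<le>m. y (m - i)) \<le> (\<Sum>j\<le>N. y j)"
proof -
  have "(\<Sum>i\<le>m. y (m - i)) = (\<Sum>j\<in>(\<lambda>i. m - i) ` {..m}. y j)"
    by (subst sum.reindex) (auto simp: inj_on_def)
  also have "\<dots> \<le> (\<Sum>j\<le>N. y j)"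
    using assms by (intro sum_mono2) auto
  finally show ?thesis .
qed

lemma triangle_le_square:
  fixes g :: "nat \<Rightarrow> nat \<Rightarrow> real"
  assumes "\<And>i j. g i j \<ge> 0"
  shows "(\<Sum>m\<le>N. \<Sum>i\<le>m. g i (m - i)) \<le> (\<Sum>i\<le>N. \<Sum>j\<le>N. g i j)"
proof -
  have "(\<Sum>m\<le>N. \<Sum>i\<le>m. g i (m - i)) = (\<Sum>(i,j)\<in>{(i,j). i+j \<le> N}. g i j)"
    by (rule sum.triangle_reindex_eq[symmetric])
  also have "\<dots> \<le> (\<Sum>(i,j)\<in>{..N} \<times> {..N}. g i j)"
    using assms by (intro sum_mono2) auto
  also have "\<dots> = (\<Sum>i\<le>N. \<Sum>j\<le>N. g i j)"
    by (simp add: sum.cartesian_product)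
  finally show ?thesis .
qed

lemma young1:
  fixes x y :: "nat \<Rightarrow> real"
  assumes x: "\<And>i. x i \<ge> 0" and y: "\<And>j. y j \<ge> 0"
  shows "L2_set (\<lambda>m. \<Sum>i\<le>m. x i * y (m - i)) {..N} \<le> L2_set x {..N} * (\<Sum>j\<le>N. y j)"
proof -
  define Y where "Y = (\<Sum>j\<le>N. y j)"
  have Y0: "Y \<ge> 0" unfolding Y_def using y by (simp add: sum_nonneg)
  have "(\<Sum>m\<le>N. (\<Sum>i\<le>m. x i * y (m - i))\<^sup>2) \<le> (\<Sum>m\<le>N. (\<Sum>i\<le>m. (x i)\<^sup>2 * y (m - i)) * Y)"
  proof (rule sum_mono)
    fix m assume m: "m \<in> {..N}"
    have "(\<Sum>i\<le>m. x i * y (m - i))\<^sup>2 \<le> (\<Sum>i\<le>m. (x i)\<^sup>2 * y (m - i)) * (\<Sum>i\<le>m. y (m - i))"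
      using y by (intro weighted_CS) auto
    also have "\<dots> \<le> (\<Sum>i\<le>m. (x i)\<^sup>2 * y (m - i)) * Y"
      unfolding Y_def using m y by (intro mult_left_mono refl_sum_le sum_nonneg) auto
    finally show "(\<Sum>i\<le>m. x i * y (m - i))\<^sup>2 \<le> (\<Sum>i\<le>m. (x i)\<^sup>2 * y (m - i)) * Y" .
  qed
  also have "\<dots> = (\<Sum>m\<le>N. \<Sum>i\<le>m. (x i)\<^sup>2 * y (m - i)) * Y" by (simp add: sum_distrib_right)
  also have "\<dots> \<le> (\<Sum>i\<le>N. \<Sum>j\<le>N. (x i)\<^sup>2 * y j) * Y"
    using y Y0 by (intro mult_right_mono triangle_le_square) auto
  also have "(\<Sum>i\<le>N. \<Sum>j\<le>N. (x i)\<^sup>2 * y j) = (\<Sum>i\<le>N. (x i)\<^sup>2) * Y"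
    unfolding Y_def sum_product ..
  finally have "(\<Sum>m\<le>N. (\<Sum>i\<le>m. x i * y (m - i))\<^sup>2) \<le> (\<Sum>i\<le>N. (x i)\<^sup>2) * Y\<^sup>2"
    by (simp add: power2_eq_square mult.assoc)
  then have "sqrt (\<Sum>m\<le>N. (\<Sum>i\<le>m. x i * y (m - i))\<^sup>2) \<le> sqrt ((\<Sum>i\<le>N. (x i)\<^sup>2) * Y\<^sup>2)"
    by (rule real_sqrt_le_mono)
  also have "\<dots> = sqrt (\<Sum>i\<le>N. (x i)\<^sup>2) * Y" using Y0 by (simp add: real_sqrt_mult)
  finally show ?thesis unfolding L2_set_def Y_def .
qed

lemma young2:
  fixes x y :: "nat \<Rightarrow> real"
  assumes x: "\<And>i. x i \<ge> 0" and y: "\<And>j. y j \<ge> 0"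
  shows "L2_set (\<lambda>m. \<Sum>i\<le>m. x i * y (m - i)) {..N} \<le> (\<Sum>i\<le>N. x i) * L2_set y {..N}"
proof -
  define X where "X = (\<Sum>i\<le>N. x i)"
  have X0: "X \<ge> 0" unfolding X_def using x by (simp add: sum_nonneg)
  have "(\<Sum>m\<le>N. (\<Sum>i\<le>m. x i * y (m - i))\<^sup>2) \<le> (\<Sum>m\<le>N. (\<Sum>i\<le>m. (y (m - i))\<^sup>2 * x i) * X)"
  proof (rule sum_mono)
    fix m assume m: "m \<in> {..N}"
    have "(\<Sum>i\<le>m. x i * y (m - i))\<^sup>2 = (\<Sum>i\<le>m. y (m - i) * x i)\<^sup>2" by (simp add: mult.commute)
    also have "\<dots> \<le> (\<Sum>i\<le>m. (y (m - i))\<^sup>2 * x i) * (\<Sum>i\<le>m. x i)"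
      using x by (intro weighted_CS) auto
    also have "\<dots> \<le> (\<Sum>i\<le>m. (y (m - i))\<^sup>2 * x i) * X"
      unfolding X_def using m x by (intro mult_left_mono sum_mono2 sum_nonneg) auto
    finally show "(\<Sum>i\<le>m. x i * y (m - i))\<^sup>2 \<le> (\<Sum>i\<le>m. (y (m - i))\<^sup>2 * x i) * X" .
  qed
  also have "\<dots> = (\<Sum>m\<le>N. \<Sum>i\<le>m. (y (m - i))\<^sup>2 * x i) * X" by (simp add: sum_distrib_right)
  also have "\<dots> \<le> (\<Sum>i\<le>N. \<Sum>j\<le>N. (y j)\<^sup>2 * x i) * X"
    using x X0 by (intro mult_right_mono triangle_le_square[where g = "\<lambda>i j. (y j)\<^sup>2 * x i"]) auto
  also have "(\<Sum>i\<le>N. \<Sum>j\<le>N. (y j)\<^sup>2 * x i) = (\<Sum>j\<le>N. (y j)\<^sup>2) * X"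
    unfolding X_def sum_product by (subst sum.swap) (simp add: mult.commute)
  finally have "(\<Sum>m\<le>N. (\<Sum>i\<le>m. x i * y (m - i))\<^sup>2) \<le> X\<^sup>2 * (\<Sum>j\<le>N. (y j)\<^sup>2)"
    by (simp add: power2_eq_square mult_ac)
  then have "sqrt (\<Sum>m\<le>N. (\<Sum>i\<le>m. x i * y (m - i))\<^sup>2) \<le> sqrt (X\<^sup>2 * (\<Sum>j\<le>N. (y j)\<^sup>2))"
    by (rule real_sqrt_le_mono)
  also have "\<dots> = X * sqrt (\<Sum>j\<le>N. (y j)\<^sup>2)" using X0 by (simp add: real_sqrt_mult)
  finally show ?thesis unfolding L2_set_def X_def .
qed

lemma weight_split:
  assumes "i \<le> m"
  shows "(1 + real m) ^ k \<le> 2 ^ k * ((1 + real i) ^ k + (1 + real (m - i)) ^ k)"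
proof -
  define a where "a = 1 + real i"
  define b where "b = 1 + real (m - i)"
  have a0: "a \<ge> 0" and b0: "b \<ge> 0" unfolding a_def b_def by auto
  have "a + b = 2 + real m" unfolding a_def b_def using assms by (simp add: of_nat_diff)
  moreover have "a \<le> max a b" "b \<le> max a b" by auto
  ultimately have "1 + real m \<le> 2 * max a b" by linarith
  then have "(1 + real m) ^ k \<le> (2 * max a b) ^ k" by (intro power_mono) auto
  also have "\<dots> = 2 ^ k * (max a b) ^ k" by (simp add: power_mult_distrib)
  also have "(max a b) ^ k \<le> a ^ k + b ^ k"
    using a0 b0 by (cases "a \<le> b") (auto simp: max_def)
  finally show ?thesis unfolding a_def b_def by (simp add: mult_left_mono)
qed

lemma W_mult: "W k (P * Q) \<le> 2 ^ k * (W k P * A Q + A P * W k Q)"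
proof -
  define N where "N = degree P + degree Q"
  have dP: "degree P \<le> N" and dQ: "degree Q \<le> N" and dPQ: "degree (P * Q) \<le> N"
    unfolding N_def by (auto intro: degree_mult_le)
  define a where "a = (\<lambda>i. cmod (coeff P i))"
  define b where "b = (\<lambda>i. cmod (coeff Q i))"
  define w where "w = (\<lambda>i::nat. (1 + real i) ^ k)"
  have a0: "\<And>i. a i \<ge> 0" and b0: "\<And>i. b i \<ge> 0" and w0: "\<And>i. w i \<ge> 0"
    unfolding a_def b_def w_def by auto
  define X where "X = (\<lambda>m. \<Sum>i\<le>m. (w i * a i) * b (m - i))"
  define Y where "Y = (\<lambda>m. \<Sum>i\<le>m. a i * (w (m - i) * b (m - i)))"
  have X0: "X m \<ge> 0" and Y0: "Y m \<ge> 0" for m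
    unfolding X_def Y_def using a0 b0 w0 by (auto intro!: sum_nonneg)
  have pt: "w m * cmod (coeff (P * Q) m) \<le> 2 ^ k * (X m + Y m)" for m
  proof -
    have "cmod (coeff (P * Q) m) \<le> (\<Sum>i\<le>m. a i * b (m - i))"
      unfolding coeff_mult a_def b_def by (rule order_trans[OF norm_sum]) (simp add: norm_mult)
    then have "w m * cmod (coeff (P * Q) m) \<le> w m * (\<Sum>i\<le>m. a i * b (m - i))"
      using w0 by (rule mult_left_mono)
    also have "\<dots> = (\<Sum>i\<le>m. w m * (a i * b (m - i)))" by (simp add: sum_distrib_left)
    also have "\<dots> \<le> (\<Sum>i\<le>m. 2 ^ k * ((w i * a i) * b (m - i) + a i * (w (m - i) * b (m - i))))"
    proof (rule sum_mono)
      fix i assume "i \<in> {..m}"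
      then have "w m \<le> 2 ^ k * (w i + w (m - i))" unfolding w_def by (intro weight_split) auto
      then have "w m * (a i * b (m - i)) \<le> 2 ^ k * (w i + w (m - i)) * (a i * b (m - i))"
        using a0 b0 by (intro mult_right_mono) auto
      then show "w m * (a i * b (m - i)) \<le> 2 ^ k * ((w i * a i) * b (m - i) + a i * (w (m - i) * b (m - i)))"
        by (simp add: algebra_simps)
    qed
    also have "\<dots> = 2 ^ k * (X m + Y m)"
      unfolding X_def Y_def by (simp add: sum_distrib_left sum.distrib distrib_left)
    finally show ?thesis .
  qed
  have "Wt k N (P * Q) \<le> L2_set (\<lambda>m. 2 ^ k * (X m + Y m)) {..N}"
    unfolding Wt_def by (rule L2_set_mono) (use pt in \<open>auto simp: w_def\<close>)
  also have "\<dots> = 2 ^ k * L2_set (\<lambda>m. X m + Y m) {..N}"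
    by (rule L2_set_right_distrib[symmetric]) simp
  also have "L2_set (\<lambda>m. X m + Y m) {..N} \<le> L2_set X {..N} + L2_set Y {..N}"
    by (rule L2_set_triangle_ineq)
  also have "L2_set X {..N} \<le> L2_set (\<lambda>i. w i * a i) {..N} * (\<Sum>j\<le>N. b j)"
    unfolding X_def using a0 b0 w0 by (intro young1) auto
  also have "L2_set Y {..N} \<le> (\<Sum>i\<le>N. a i) * L2_set (\<lambda>j. w j * b j) {..N}"
    unfolding Y_def using a0 b0 w0 by (intro young2[where y = "\<lambda>j. w j * b j"]) auto
  also have "L2_set (\<lambda>i. w i * a i) {..N} = W k P"
    using Wt_eq[OF dP] unfolding Wt_def w_def a_def .
  also have "L2_set (\<lambda>j. w j * b j) {..N} = W k Q"
    using Wt_eq[OF dQ] unfolding Wt_def w_def b_def .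
  also have "(\<Sum>j\<le>N. b j) = A Q" using At_eq[OF dQ] unfolding At_def b_def .
  also have "(\<Sum>i\<le>N. a i) = A P" using At_eq[OF dP] unfolding At_def a_def .
  finally show ?thesis using Wt_eq[OF dPQ] by (simp add: mult_left_mono)
qed

lemma W_mult':
  assumes k: "k \<ge> 1"
  shows "W k (P * Q) \<le> 2 ^ (k+2) * W k P * W k Q"
proof -
  have "W k (P * Q) \<le> 2 ^ k * (W k P * A Q + A P * W k Q)" by (rule W_mult)
  also have "\<dots> \<le> 2 ^ k * (W k P * (sqrt 2 * W k Q) + (sqrt 2 * W k P) * W k Q)"
    using A_le_W[OF k, of P] A_le_W[OF k, of Q] W_nonneg[of k P] W_nonneg[of k Q]
    by (intro mult_left_mono add_mono mult_left_mono mult_right_mono) auto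
  also have "\<dots> = 2 ^ k * (2 * sqrt 2) * W k P * W k Q" by (simp add: algebra_simps)
  also have "\<dots> \<le> 2 ^ k * 4 * W k P * W k Q"
  proof -
    have "sqrt 2 \<le> 2" using sqrt2_less_2 by simp
    then have "2 * sqrt 2 \<le> (4::real)" by simp
    then show ?thesis using W_nonneg[of k P] W_nonneg[of k Q]
      by (intro mult_right_mono mult_left_mono) auto
  qed
  finally show ?thesis by (simp add: power_add)
qed

lemma W_pow:
  assumes k: "k \<ge> 1"
  shows "W k (H ^ l) \<le> (2 ^ (k+2)) ^ l * (W k H) ^ l"
proof (induction l)
  case 0
  then show ?case by simp
next
  case (Suc l)
  have "W k (H ^ Suc l) = W k (H * H ^ l)" by simp
  also have "\<dots> \<le> 2 ^ (k+2) * W k H * W k (H ^ l)" by (rule W_mult'[OF k])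
  also have "\<dots> \<le> 2 ^ (k+2) * W k H * ((2 ^ (k+2)) ^ l * (W k H) ^ l)"
    using Suc W_nonneg[of k H] by (intro mult_left_mono) auto
  finally show ?case by (simp add: algebra_simps)
qed

definition EP :: "nat \<Rightarrow> complex poly \<Rightarrow> complex poly" where
  "EP L H = (\<Sum>l\<le>L. smult (complex_of_real (inverse (fact l))) (H ^ l))"

lemma exp_partial_le: "t \<ge> 0 \<Longrightarrow> (\<Sum>l\<le>L. t ^ l / fact l) \<le> exp (t::real)"
proof -
  assume t: "t \<ge> 0"
  have s: "summable (\<lambda>n. t ^ n /\<^sub>R fact n)" by (rule summable_exp_generic)
  have "(\<Sum>l\<le>L. t ^ l /\<^sub>R fact l) \<le> (\<Sum>n. t ^ n /\<^sub>R fact n)"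
    by (rule sum_le_suminf[OF s]) (use t in auto)
  then show ?thesis by (simp add: exp_def divide_inverse mult.commute)
qed

lemma W_EP:
  assumes k: "k \<ge> 1"
  shows "W k (EP L H) \<le> exp (2 ^ (k+2) * W k H)"
proof -
  have "W k (EP L H) \<le> (\<Sum>l\<le>L. W k (smult (complex_of_real (inverse (fact l))) (H ^ l)))"
    unfolding EP_def by (rule W_sum) simp
  also have "\<dots> = (\<Sum>l\<le>L. inverse (fact l) * W k (H ^ l))"
    by (intro sum.cong refl, simp only: W_smult norm_of_real abs_inverse, simp)
  also have "\<dots> \<le> (\<Sum>l\<le>L. (2 ^ (k+2) * W k H) ^ l / fact l)"
  proof (rule sum_mono)
    fix l
    have "inverse (fact l) * W k (H ^ l) \<le> inverse (fact l) * ((2 ^ (k+2)) ^ l * (W k H) ^ l)"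
      using W_pow[OF k, of H l] by (intro mult_left_mono) auto
    then show "inverse (fact l) * W k (H ^ l) \<le> (2 ^ (k+2) * W k H) ^ l / fact l"
      by (simp add: power_mult_distrib divide_inverse mult.commute)
  qed
  also have "\<dots> \<le> exp (2 ^ (k+2) * W k H)"
    using W_nonneg[of k H] by (intro exp_partial_le) auto
  finally show ?thesis .
qed

lemma coeff_EP_0:
  assumes "coeff H 0 = 0"
  shows "coeff (EP L H) 0 = 1"
proof -
  have "coeff (EP L H) 0 = (\<Sum>l\<le>L. complex_of_real (inverse (fact l)) * (coeff H 0) ^ l)"
    unfolding EP_def by (simp add: coeff_sum coeff_0_power)
  also have "\<dots> = (\<Sum>l\<le>L. if l = 0 then 1 else 0)"
    using assms by (intro sum.cong refl) auto
  also have "\<dots> = 1" by simp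
  finally show ?thesis .
qed

lemma poly_EP: "poly (EP L H) z = (\<Sum>l\<le>L. (poly H z) ^ l /\<^sub>R fact l)"
  unfolding EP_def by (simp add: poly_sum scaleR_conv_of_real)

lemma exp_trunc:
  fixes w :: complex
  assumes "cmod w \<le> R"
  shows "cmod (exp w - (\<Sum>l\<le>L. w ^ l /\<^sub>R fact l)) \<le> exp R - (\<Sum>l\<le>L. R ^ l /\<^sub>R fact l)"
proof -
  have R0: "R \<ge> 0" using assms norm_ge_zero order_trans by blast
  have sw: "summable (\<lambda>n. w ^ n /\<^sub>R fact n)" by (rule summable_exp_generic)
  have sR: "summable (\<lambda>n. R ^ n /\<^sub>R fact n)" by (rule summable_exp_generic)
  have "exp w - (\<Sum>l\<le>L. w ^ l /\<^sub>R fact l) = (\<Sum>n. w ^ (n + Suc L) /\<^sub>R fact (n + Suc L))"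
    unfolding exp_def using suminf_minus_initial_segment[OF sw, of "Suc L"]
    by (simp add: lessThan_Suc_atMost)
  moreover have "exp R - (\<Sum>l\<le>L. R ^ l /\<^sub>R fact l) = (\<Sum>n. R ^ (n + Suc L) /\<^sub>R fact (n + Suc L))"
    unfolding exp_def using suminf_minus_initial_segment[OF sR, of "Suc L"]
    by (simp add: lessThan_Suc_atMost)
  moreover have "cmod (\<Sum>n. w ^ (n + Suc L) /\<^sub>R fact (n + Suc L)) \<le> (\<Sum>n. R ^ (n + Suc L) /\<^sub>R fact (n + Suc L))"
  proof (rule norm_suminf_le)
    fix n
    have "cmod (w ^ (n + Suc L)) \<le> R ^ (n + Suc L)"
      unfolding norm_power by (rule power_mono[OF assms norm_ge_zero])
    then show "cmod (w ^ (n + Suc L) /\<^sub>R fact (n + Suc L)) \<le> R ^ (n + Suc L) /\<^sub>R fact (n + Suc L)"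
      by (simp add: divide_right_mono)
  next
    show "summable (\<lambda>n. R ^ (n + Suc L) /\<^sub>R fact (n + Suc L))"
      by (rule summable_ignore_initial_segment[OF sR])
  qed
  ultimately show ?thesis by simp
qed

lemma exp_trunc_lim: "(\<lambda>L. exp R - (\<Sum>l\<le>L. R ^ l /\<^sub>R fact l)) \<longlonglongrightarrow> (0::real)"
proof -
  have "(\<lambda>n. \<Sum>i<n. R ^ i /\<^sub>R fact i) \<longlonglongrightarrow> exp R"
    using exp_converges[of R] unfolding sums_def .
  then have "(\<lambda>L. \<Sum>i<Suc L. R ^ i /\<^sub>R fact i) \<longlonglongrightarrow> exp R"
    by (rule LIMSEQ_Suc)
  then have "(\<lambda>L. \<Sum>i\<le>L. R ^ i /\<^sub>R fact i) \<longlonglongrightarrow> exp R"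
    by (simp add: lessThan_Suc_atMost)
  then have "(\<lambda>L. exp R - (\<Sum>l\<le>L. R ^ l /\<^sub>R fact l)) \<longlonglongrightarrow> exp R - exp R"
    by (intro tendsto_intros)
  then show ?thesis by simp
qed



lemma ci_integrable:
  assumes "continuous_on {-pi..pi} \<phi>"
  shows "(\<lambda>\<theta>. poly f (cis \<theta>) * cnj (poly g (cis \<theta>)) * complex_of_real (\<phi> \<theta>)) integrable_on {-pi..pi}"
  by (intro integrable_continuous_interval continuous_intros continuous_on_compose2[OF continuous_on_of_real] assms)
     (auto intro: continuous_on_subset[OF continuous_on_of_real])

lemma ci_add_left:
  assumes "continuous_on {-pi..pi} \<phi>"
  shows "circ_inner \<phi> (f1 + f2) g = circ_inner \<phi> f1 g + circ_inner \<phi> f2 g"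
proof -
  define F1 where "F1 = (\<lambda>\<theta>. poly f1 (cis \<theta>) * cnj (poly g (cis \<theta>)) * complex_of_real (\<phi> \<theta>))"
  define F2 where "F2 = (\<lambda>\<theta>. poly f2 (cis \<theta>) * cnj (poly g (cis \<theta>)) * complex_of_real (\<phi> \<theta>))"
  have e: "(\<lambda>\<theta>. poly (f1 + f2) (cis \<theta>) * cnj (poly g (cis \<theta>)) * complex_of_real (\<phi> \<theta>)) = (\<lambda>\<theta>. F1 \<theta> + F2 \<theta>)"
    unfolding F1_def F2_def by (rule ext) (simp add: algebra_simps)
  have i: "integral {-pi..pi} (\<lambda>\<theta>. F1 \<theta> + F2 \<theta>) = integral {-pi..pi} F1 + integral {-pi..pi} F2"
    unfolding F1_def F2_def by (intro integral_add ci_integrable[OF assms])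
  show ?thesis unfolding circ_inner_def e i unfolding F1_def F2_def by (simp add: distrib_left)
qed

lemma ci_smult_left:
  shows "circ_inner \<phi> (smult c f) g = c * circ_inner \<phi> f g"
proof -
  have "circ_inner \<phi> (smult c f) g = complex_of_real (1 / (2 * pi)) * integral {-pi..pi}
     (\<lambda>\<theta>. c * (poly f (cis \<theta>) * cnj (poly g (cis \<theta>)) * complex_of_real (\<phi> \<theta>)))"
    unfolding circ_inner_def by (simp add: algebra_simps)
  also have "\<dots> = c * circ_inner \<phi> f g"
    unfolding circ_inner_def by (simp only: integral_mult_right) (simp add: algebra_simps)
  finally show ?thesis .
qed

lemma ci_zero_left [simp]: "circ_inner \<phi> 0 g = 0"
  unfolding circ_inner_def by simp

lemma ci_cnj: "circ_inner \<phi> f g = cnj (circ_inner \<phi> g f)"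
  unfolding circ_inner_def
  by (simp add: integral_cnj mult.commute mult.left_commute)

lemma ci_diff_left:
  assumes "continuous_on {-pi..pi} \<phi>"
  shows "circ_inner \<phi> (f1 - f2) g = circ_inner \<phi> f1 g - circ_inner \<phi> f2 g"
  using ci_add_left[OF assms, of "f1 - f2" f2 g] by simp

definition rn :: "(real \<Rightarrow> real) \<Rightarrow> complex poly \<Rightarrow> real" where
  "rn \<phi> Q = (1 / (2 * pi)) * integral {-pi..pi} (\<lambda>\<theta>. (cmod (poly Q (cis \<theta>)))\<^sup>2 * \<phi> \<theta>)"

lemma ci_self:
  assumes "continuous_on {-pi..pi} \<phi>"
  shows "circ_inner \<phi> Q Q = complex_of_real (rn \<phi> Q)"
proof -
  have "(\<lambda>\<theta>. poly Q (cis \<theta>) * cnj (poly Q (cis \<theta>)) * complex_of_real (\<phi> \<theta>))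
      = (\<lambda>\<theta>. complex_of_real ((cmod (poly Q (cis \<theta>)))\<^sup>2 * \<phi> \<theta>))"
    by (rule ext) (simp only: complex_norm_square[symmetric] of_real_mult)
  moreover have "integral {-pi..pi} (\<lambda>\<theta>. complex_of_real ((cmod (poly Q (cis \<theta>)))\<^sup>2 * \<phi> \<theta>))
      = complex_of_real (integral {-pi..pi} (\<lambda>\<theta>. (cmod (poly Q (cis \<theta>)))\<^sup>2 * \<phi> \<theta>))"
    by (intro integral_unique has_integral_of_real integrable_integral integrable_continuous_interval
        continuous_intros assms)
  ultimately show ?thesis unfolding circ_inner_def rn_def by simp
qed

lemma rn_nonneg:
  assumes "continuous_on {-pi..pi} \<phi>" "\<And>\<theta>. \<phi> \<theta> > 0"
  shows "rn \<phi> Q \<ge> 0"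
  unfolding rn_def using assms
  by (intro mult_nonneg_nonneg integral_nonneg integrable_continuous_interval continuous_intros)
     (auto intro: less_imp_le)

lemma orth_low:
  fixes p :: "nat \<Rightarrow> complex poly"
  assumes cont: "continuous_on {-pi..pi} \<phi>"
    and deg: "\<And>n. degree (p n) = n"
    and lead: "\<And>n. lead_coeff (p n) \<noteq> 0"
    and orth: "\<And>m n. circ_inner \<phi> (p m) (p n) = (if m = n then 1 else 0)"
  shows "R = 0 \<or> degree R < n \<Longrightarrow> circ_inner \<phi> R (p n) = 0"
proof (induction "degree R" arbitrary: R rule: less_induct)
  case less
  show ?case
  proof (cases "R = 0")
    case True
    then show ?thesis by simp
  next
    case False
    define d where "d = degree R"
    have dn: "d < n" using less.prems False unfolding d_def by auto
    define c where "c = lead_coeff R / lead_coeff (p d)"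
    define R' where "R' = R - smult c (p d)"
    have cR': "coeff R' d = 0" unfolding R'_def c_def d_def using lead[of "degree R"] deg[of "degree R"]
      by simp
    have dR': "degree R' \<le> d" unfolding R'_def d_def using deg[of "degree R"]
      by (intro degree_diff_le) (auto intro: order_trans[OF degree_smult_le])
    have R'case: "R' = 0 \<or> degree R' < d"
    proof (cases "R' = 0")
      case False
      then have "degree R' \<noteq> d" using cR' by (metis leading_coeff_0_iff)
      then show ?thesis using dR' by simp
    qed simp
    have IH: "circ_inner \<phi> R' (p n) = 0"
    proof (cases "R' = 0")
      case True
      then show ?thesis by simp
    next
      case False
      then have "degree R' < degree R" using R'case unfolding d_def by simp
      moreover have "R' = 0 \<or> degree R' < n" using R'case dn by auto
      ultimately show ?thesis using less.hyps by blast
    qed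
    have "R = smult c (p d) + R'" unfolding R'_def by simp
    then have "circ_inner \<phi> R (p n) = c * circ_inner \<phi> (p d) (p n) + circ_inner \<phi> R' (p n)"
      by (simp add: ci_add_left[OF cont] ci_smult_left)
    also have "\<dots> = 0" using orth[of d n] dn IH by simp
    finally show ?thesis .
  qed
qed

lemma extremal:
  fixes p :: "nat \<Rightarrow> complex poly" and Q :: "complex poly"
  assumes cont: "continuous_on {-pi..pi} \<phi>" and pos: "\<And>\<theta>. \<phi> \<theta> > 0"
    and deg: "\<And>n. degree (p n) = n"
    and lead_pos: "\<And>n. Im (lead_coeff (p n)) = 0 \<and> Re (lead_coeff (p n)) > 0"
    and orth: "\<And>m n. circ_inner \<phi> (p m) (p n) = (if m = n then 1 else 0)"
    and Qd: "degree Q = n" and Qm: "lead_coeff Q = 1"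
  shows "1 / (Re (lead_coeff (p n)))\<^sup>2 \<le> rn \<phi> Q"
proof -
  define \<kappa> where "\<kappa> = Re (lead_coeff (p n))"
  have k0: "\<kappa> > 0" unfolding \<kappa>_def using lead_pos by simp
  have lk: "lead_coeff (p n) = complex_of_real \<kappa>" unfolding \<kappa>_def using lead_pos[of n]
    by (simp add: complex_eq_iff)
  have lead: "\<And>n. lead_coeff (p n) \<noteq> 0"
  proof -
    fix n show "lead_coeff (p n) \<noteq> 0" using lead_pos[of n] by auto
  qed
  define P where "P = smult (complex_of_real (1/\<kappa>)) (p n)"
  define R where "R = Q - P"
  have dP: "degree P = n" unfolding P_def using k0 deg by simp
  have lP: "lead_coeff P = 1" unfolding P_def using k0 lk dP deg[of n] by (simp add: field_simps)
  have Rc: "R = 0 \<or> degree R < n"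
  proof (cases "R = 0")
    case False
    have "coeff R n = 0" unfolding R_def using Qm lP Qd dP by simp
    moreover have "degree R \<le> n" unfolding R_def using Qd dP by (metis degree_diff_le order_refl)
    ultimately have "degree R < n" using False by (metis le_neq_implies_less leading_coeff_0_iff)
    then show ?thesis by simp
  qed simp
  have o1: "circ_inner \<phi> R (p n) = 0" using orth_low[OF cont deg lead orth Rc] .
  have o2: "circ_inner \<phi> R P = 0"
  proof -
    have "circ_inner \<phi> R P = cnj (circ_inner \<phi> P R)" by (rule ci_cnj)
    also have "circ_inner \<phi> P R = complex_of_real (1/\<kappa>) * circ_inner \<phi> (p n) R"
      unfolding P_def by (rule ci_smult_left)
    also have "circ_inner \<phi> (p n) R = cnj (circ_inner \<phi> R (p n))" by (rule ci_cnj)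
    finally show ?thesis using o1 by simp
  qed
  have o3: "circ_inner \<phi> P R = 0" using o2 ci_cnj[of \<phi> P R] by simp
  have pp: "circ_inner \<phi> P P = complex_of_real (1 / \<kappa>^2)"
  proof -
    have "circ_inner \<phi> P P = complex_of_real (1/\<kappa>) * circ_inner \<phi> (p n) P"
      unfolding P_def by (rule ci_smult_left)
    also have "circ_inner \<phi> (p n) P = cnj (circ_inner \<phi> P (p n))" by (rule ci_cnj)
    also have "circ_inner \<phi> P (p n) = complex_of_real (1/\<kappa>) * circ_inner \<phi> (p n) (p n)"
      unfolding P_def by (rule ci_smult_left)
    finally show ?thesis using orth[of n n] by (simp add: power2_eq_square)
  qed
  have "Q = P + R" unfolding R_def by simp
  then have "circ_inner \<phi> Q Q = circ_inner \<phi> P P + circ_inner \<phi> R R"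
  proof -
    assume QPR: "Q = P + R"
    have "circ_inner \<phi> Q Q = circ_inner \<phi> P Q + circ_inner \<phi> R Q"
      unfolding QPR by (rule ci_add_left[OF cont])
    also have "circ_inner \<phi> P Q = cnj (circ_inner \<phi> Q P)" by (rule ci_cnj)
    also have "circ_inner \<phi> Q P = circ_inner \<phi> P P + circ_inner \<phi> R P"
      unfolding QPR by (rule ci_add_left[OF cont])
    also have "circ_inner \<phi> R Q = cnj (circ_inner \<phi> Q R)" by (rule ci_cnj)
    also have "circ_inner \<phi> Q R = circ_inner \<phi> P R + circ_inner \<phi> R R"
      unfolding QPR by (rule ci_add_left[OF cont])
    finally show ?thesis using o2 o3 pp ci_self[OF cont, of R] by simp
  qed
  then have "rn \<phi> Q = 1 / \<kappa>^2 + rn \<phi> R" using ci_self[OF cont] pp by (metis of_real_add of_real_eq_iff)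
  then show ?thesis using rn_nonneg[OF cont pos, of R] unfolding \<kappa>_def by simp
qed

definition revp :: "nat \<Rightarrow> complex poly \<Rightarrow> complex poly" where
  "revp n q = (\<Sum>j\<le>n. monom (cnj (coeff q (n - j))) j)"

lemma coeff_revp: "coeff (revp n q) j = (if j \<le> n then cnj (coeff q (n - j)) else 0)"
  unfolding revp_def by (simp add: coeff_sum coeff_monom)

lemma degree_revp: "degree (revp n q) \<le> n"
  by (rule degree_le) (auto simp: coeff_revp)

lemma revp_monic:
  assumes "coeff q 0 = 1"
  shows "degree (revp n q) = n" "lead_coeff (revp n q) = 1"
proof -
  have c: "coeff (revp n q) n = 1" using assms by (simp add: coeff_revp)
  then have "n \<le> degree (revp n q)" by (intro le_degree) simp
  then show d: "degree (revp n q) = n" using degree_revp[of n q] by simp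
  show "lead_coeff (revp n q) = 1" using c d by simp
qed

lemma poly_revp:
  assumes "degree q \<le> n"
  shows "poly (revp n q) (cis \<theta>) = cis (real n * \<theta>) * cnj (poly q (cis \<theta>))"
proof -
  have "poly (revp n q) (cis \<theta>) = (\<Sum>j\<le>n. cnj (coeff q (n - j)) * cis (real j * \<theta>))"
    unfolding revp_def by (simp add: poly_sum poly_monom Complex.DeMoivre)
  also have "\<dots> = (\<Sum>i\<le>n. cnj (coeff q i) * cis (real (n - i) * \<theta>))"
    using sum.atLeastAtMost_rev[of "\<lambda>j. cnj (coeff q (n - j)) * cis (real j * \<theta>)" 0 n]
    by (simp add: atLeast0AtMost)
  also have "\<dots> = (\<Sum>i\<le>n. cis (real n * \<theta>) * (cnj (coeff q i) * cis (- (real i * \<theta>))))"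
  proof (intro sum.cong refl)
    fix i assume "i \<in> {..n}"
    then have "real (n - i) * \<theta> = real n * \<theta> + (- (real i * \<theta>))" by (simp add: of_nat_diff algebra_simps)
    then have "cis (real (n - i) * \<theta>) = cis (real n * \<theta>) * cis (- (real i * \<theta>))"
      by (simp only: cis_mult)
    then show "cnj (coeff q i) * cis (real (n - i) * \<theta>) = cis (real n * \<theta>) * (cnj (coeff q i) * cis (- (real i * \<theta>)))"
      by simp
  qed
  also have "\<dots> = cis (real n * \<theta>) * cnj (\<Sum>i\<le>n. coeff q i * cis (real i * \<theta>))"
    by (simp add: sum_distrib_left cnj_sum cis_cnj)
  also have "(\<Sum>i\<le>n. coeff q i * cis (real i * \<theta>)) = poly q (cis \<theta>)"
  proof -
    have "poly q (cis \<theta>) = (\<Sum>i\<le>degree q. coeff q i * cis \<theta> ^ i)" by (simp add: poly_altdef)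
    also have "\<dots> = (\<Sum>i\<le>n. coeff q i * cis \<theta> ^ i)"
      using assms by (intro sum.mono_neutral_left) (auto simp: coeff_eq_0)
    finally show ?thesis by (simp add: Complex.DeMoivre)
  qed
  finally show ?thesis .
qed

lemma cmod_poly_revp:
  assumes "degree q \<le> n"
  shows "cmod (poly (revp n q) (cis \<theta>)) = cmod (poly q (cis \<theta>))"
  using poly_revp[OF assms] by (simp add: norm_mult)



lemma exp_quad:
  fixes x M :: real
  assumes "\<bar>x\<bar> \<le> M"
  shows "exp x \<le> 1 + x + exp M * x\<^sup>2"
proof -
  obtain t where t: "\<bar>t\<bar> \<le> \<bar>x\<bar>" "exp x = (\<Sum>m<2. (x ^ m) / fact m) + (exp t / fact 2) * x ^ 2"
    using Maclaurin_exp_le[of x 2] by blast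
  have "exp t \<le> exp M" using t(1) assms by simp
  moreover have "exp t > 0" by simp
  ultimately have "exp t / 2 \<le> exp M" by linarith
  then have "exp t / 2 * x\<^sup>2 \<le> exp M * x\<^sup>2"
    by (intro mult_right_mono) auto
  then show ?thesis using t(2) by (simp add: numeral_2_eq_2)
qed

locale szego =
  fixes V :: "real \<Rightarrow> real" and k :: nat and L :: real and D :: "nat \<Rightarrow> real \<Rightarrow> real"
  assumes k: "k \<ge> 1" and per: "\<forall>x. V (x + 2*pi) = V x" and D0: "D 0 = V"
    and Dder: "\<forall>j<k-1. \<forall>x. (D j has_real_derivative D (Suc j) x) (at x)"
    and Lip: "\<forall>x y. \<bar>D (k-1) x - D (k-1) y\<bar> \<le> L * \<bar>x - y\<bar>"
begin

definition fV :: "real \<Rightarrow> complex" where "fV = (\<lambda>\<theta>. complex_of_real (V \<theta>))"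
definition v :: "int \<Rightarrow> complex" where "v = fc fV"
definition V0 :: real where "V0 = (1 / (2 * pi)) * integral {-pi..pi} V"

lemma contV: "continuous_on UNIV V"
  using D_cont[OF Dder Lip, of 0] D0 by simp

lemma CCV: "continuous_on {-pi..pi} V"
  using contV continuous_on_subset by blast

lemma CCfV: "CC fV"
  unfolding fV_def by (intro continuous_intros CCV)

lemma L0: "L \<ge> 0"
proof -
  have "\<bar>D (k-1) 1 - D (k-1) 0\<bar> \<le> L" using Lip[rule_format, of 1 0] by simp
  then show ?thesis by (meson abs_ge_zero order_trans)
qed

lemma decay: "(\<Sum>j\<in>{-M..M}. real_of_int \<bar>j\<bar> ^ (2*k) * (cmod (v j))\<^sup>2) \<le> L\<^sup>2"
  unfolding v_def fV_def by (rule V_decay[OF k per D0 Dder Lip])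

lemma v_neg: "v (- j) = cnj (v j)"
proof -
  have "ip fV (ecis (- j)) = cnj (ip fV (ecis j))"
    unfolding ip_def integral_cnj fV_def ecis_def by (simp add: cis_cnj)
  then show ?thesis unfolding v_def fc_def by simp
qed

lemma v0: "v 0 = complex_of_real V0"
proof -
  have "ip fV (ecis 0) = integral {-pi..pi} (\<lambda>\<theta>. complex_of_real (V \<theta>))"
    unfolding ip_def fV_def by simp
  also have "\<dots> = complex_of_real (integral {-pi..pi} V)"
    by (intro integral_unique has_integral_of_real integrable_integral integrable_continuous_interval CCV)
  finally show ?thesis unfolding v_def fc_def V0_def by simp
qed

definition Hn :: "nat \<Rightarrow> complex poly" where
  "Hn n = (\<Sum>j\<in>{1..n}. monom (v (int j)) j)"

lemma coeff_Hn: "coeff (Hn n) i = (if 1 \<le> i \<and> i \<le> n then v (int i) else 0)"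
  unfolding Hn_def by (simp add: coeff_sum coeff_monom)

lemma coeff_Hn0: "coeff (Hn n) 0 = 0"
  by (simp add: coeff_Hn)

lemma poly_Hn0: "poly (Hn n) 0 = 0"
  using coeff_Hn0 by (simp add: poly_0_coeff_0)

lemma degree_Hn: "degree (Hn n) \<le> n"
  by (rule degree_le) (auto simp: coeff_Hn)

lemma trig_split: "trig {-int n..int n} v \<theta> = complex_of_real V0 + poly (Hn n) (cis \<theta>) + cnj (poly (Hn n) (cis \<theta>))"
proof (induction n)
  case 0
  then show ?case by (simp add: trig_def Hn_def v0)
next
  case (Suc n)
  have set: "{-int (Suc n)..int (Suc n)} = insert (int (Suc n)) (insert (- int (Suc n)) {-int n..int n})"
    by auto
  have "trig {-int (Suc n)..int (Suc n)} v \<theta> = v (int (Suc n)) * ecis (int (Suc n)) \<theta> + (v (- int (Suc n)) * ecis (- int (Suc n)) \<theta> + trig {-int n..int n} v \<theta>)"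
    unfolding trig_def set by simp
  also have "v (- int (Suc n)) * ecis (- int (Suc n)) \<theta> = cnj (v (int (Suc n)) * ecis (int (Suc n)) \<theta>)"
  proof -
    have a: "v (- int (Suc n)) = cnj (v (int (Suc n)))" by (rule v_neg)
    have b: "ecis (- int (Suc n)) \<theta> = cnj (ecis (int (Suc n)) \<theta>)"
      unfolding ecis_def cis_cnj by (simp add: algebra_simps)
    show ?thesis unfolding a b by simp
  qed
  also have "v (int (Suc n)) * ecis (int (Suc n)) \<theta> = poly (monom (v (int (Suc n))) (Suc n)) (cis \<theta>)"
    unfolding poly_monom ecis_def Complex.DeMoivre by simp
  also have "Hn (Suc n) = Hn n + monom (v (int (Suc n))) (Suc n)"
    unfolding Hn_def by simp
  ultimately show ?case using Suc by (simp add: algebra_simps)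
qed

definition T :: "nat \<Rightarrow> real \<Rightarrow> real" where
  "T n \<theta> = V0 + 2 * Re (poly (Hn n) (cis \<theta>))"

definition u :: "nat \<Rightarrow> real \<Rightarrow> real" where
  "u n \<theta> = V \<theta> - T n \<theta>"

lemma trig_T: "trig {-int n..int n} v \<theta> = complex_of_real (T n \<theta>)"
  unfolding trig_split T_def by (simp add: complex_eq_iff)

lemma cont_T: "continuous_on S (T n)"
  unfolding T_def by (intro continuous_intros)

lemma cont_u: "continuous_on {-pi..pi} (u n)"
  unfolding u_def by (intro continuous_intros CCV cont_T)

lemma int_u2: "integral {-pi..pi} (\<lambda>\<theta>. (u n \<theta>)\<^sup>2) \<le> 2 * pi * L\<^sup>2 / (real n + 1) ^ (2*k)"
proof -
  have "nrm (\<lambda>\<theta>. complex_of_real (V \<theta>) - trig {-int n..int n} (fc (\<lambda>\<theta>. complex_of_real (V \<theta>))) \<theta>)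
      \<le> 2 * pi * L\<^sup>2 / (of_int (int n) + 1) ^ (2*k)"
    using decay unfolding v_def fV_def by (intro fourier_tail[OF contV per]) auto
  moreover have "nrm (\<lambda>\<theta>. complex_of_real (V \<theta>) - trig {-int n..int n} (fc (\<lambda>\<theta>. complex_of_real (V \<theta>))) \<theta>)
      = integral {-pi..pi} (\<lambda>\<theta>. (u n \<theta>)\<^sup>2)"
  proof -
    have e: "(\<lambda>\<theta>. complex_of_real (V \<theta>) - trig {-int n..int n} (fc (\<lambda>\<theta>. complex_of_real (V \<theta>))) \<theta>)
        = (\<lambda>\<theta>. complex_of_real (u n \<theta>))"
      using trig_T unfolding v_def fV_def u_def by (intro ext) simp
    show ?thesis unfolding e
      by (subst nrm_eq) (auto intro!: continuous_intros cont_u)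
  qed
  ultimately show ?thesis by simp
qed

lemma int_T: "integral {-pi..pi} (T n) = 2 * pi * V0"
proof -
  have mv: "integral {-pi..pi} (\<lambda>\<theta>. poly (Hn n) (cis \<theta>)) = 0"
    using mean_value_entire[of "poly (Hn n)"] poly_Hn0 by (simp add: holomorphic_intros)
  have iH: "(\<lambda>\<theta>. poly (Hn n) (cis \<theta>)) integrable_on {-pi..pi}"
    by (intro integrable_continuous_interval continuous_intros)
  have "integral {-pi..pi} (\<lambda>\<theta>. Re (poly (Hn n) (cis \<theta>))) = Re (integral {-pi..pi} (\<lambda>\<theta>. poly (Hn n) (cis \<theta>)))"
    using integral_linear[OF iH bounded_linear_Re] by (simp add: o_def)
  then have "integral {-pi..pi} (\<lambda>\<theta>. Re (poly (Hn n) (cis \<theta>))) = 0" using mv by simp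
  moreover have "integral {-pi..pi} (T n) = integral {-pi..pi} (\<lambda>\<theta>. V0) + 2 * integral {-pi..pi} (\<lambda>\<theta>. Re (poly (Hn n) (cis \<theta>)))"
    unfolding T_def
    by (subst integral_add) (auto intro!: integrable_continuous_interval continuous_intros)
  ultimately show ?thesis by simp
qed

lemma int_u: "integral {-pi..pi} (u n) = 0"
proof -
  have "integral {-pi..pi} (u n) = integral {-pi..pi} V - integral {-pi..pi} (T n)"
    unfolding u_def by (rule integral_diff) (auto intro!: integrable_continuous_interval CCV cont_T)
  then show ?thesis using int_T unfolding V0_def by simp
qed

lemma decay_nat: "(\<Sum>i\<in>{1..n}. real i ^ (2*k) * (cmod (v (int i)))\<^sup>2) \<le> L\<^sup>2"
proof -
  have "(\<Sum>i\<in>{1..n}. real i ^ (2*k) * (cmod (v (int i)))\<^sup>2)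
      = (\<Sum>j\<in>int ` {1..n}. real_of_int \<bar>j\<bar> ^ (2*k) * (cmod (v j))\<^sup>2)"
    by (subst sum.reindex) (auto simp: inj_on_def)
  also have "\<dots> \<le> (\<Sum>j\<in>{-int n..int n}. real_of_int \<bar>j\<bar> ^ (2*k) * (cmod (v j))\<^sup>2)"
    by (intro sum_mono2) auto
  also have "\<dots> \<le> L\<^sup>2" by (rule decay)
  finally show ?thesis .
qed

lemma sum_inv_sq1: "(\<Sum>j\<in>{1..n}. 1 / (real j)\<^sup>2) \<le> 2"
proof -
  have "(\<Sum>j\<in>{1..n}. 1 / (real j)\<^sup>2) = (\<Sum>i<n. 1 / (1 + real i)\<^sup>2)"
    using sum.atLeast1_atMost_eq[of "\<lambda>j. 1 / (real j)\<^sup>2" n] by (simp add: add.commute)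
  also have "\<dots> \<le> (\<Sum>i\<le>n. 1 / (1 + real i)\<^sup>2)" by (intro sum_mono2) auto
  also have "\<dots> \<le> 2 - 1 / (1 + real n)" by (rule sum_inv_sq)
  also have "\<dots> \<le> 2" by simp
  finally show ?thesis .
qed

definition R0 :: real where "R0 = sqrt 2 * L"

lemma sum_abs_v: "(\<Sum>j\<in>{1..n}. cmod (v (int j))) \<le> R0"
proof -
  have "(\<Sum>j\<in>{1..n}. cmod (v (int j))) = (\<Sum>j\<in>{1..n}. \<bar>1 / real j\<bar> * \<bar>real j * cmod (v (int j))\<bar>)"
    by (intro sum.cong refl) auto
  also have "\<dots> \<le> L2_set (\<lambda>j. 1 / real j) {1..n} * L2_set (\<lambda>j. real j * cmod (v (int j))) {1..n}"
    by (rule L2_set_mult_ineq)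
  finally have h1: "(\<Sum>j\<in>{1..n}. cmod (v (int j))) \<le> L2_set (\<lambda>j. 1 / real j) {1..n} * L2_set (\<lambda>j. real j * cmod (v (int j))) {1..n}" .
  have h2: "L2_set (\<lambda>j. 1 / real j) {1..n} \<le> sqrt 2"
    unfolding L2_set_def using sum_inv_sq1[of n] by (simp add: power_divide)
  have h3: "L2_set (\<lambda>j. real j * cmod (v (int j))) {1..n} \<le> L"
  proof -
    have "(\<Sum>j\<in>{1..n}. (real j * cmod (v (int j)))\<^sup>2) \<le> (\<Sum>i\<in>{1..n}. real i ^ (2*k) * (cmod (v (int i)))\<^sup>2)"
    proof (rule sum_mono)
      fix j assume j: "j \<in> {1..n}"
      have "(real j)\<^sup>2 \<le> real j ^ (2*k)" using j k by (intro power_increasing) auto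
      then show "(real j * cmod (v (int j)))\<^sup>2 \<le> real j ^ (2*k) * (cmod (v (int j)))\<^sup>2"
        by (simp add: power_mult_distrib mult_right_mono)
    qed
    also have "\<dots> \<le> L\<^sup>2" by (rule decay_nat)
    finally have "sqrt (\<Sum>j\<in>{1..n}. (real j * cmod (v (int j)))\<^sup>2) \<le> sqrt (L\<^sup>2)"
      by (rule real_sqrt_le_mono)
    then show ?thesis unfolding L2_set_def using L0 by simp
  qed
  have "L2_set (\<lambda>j. 1 / real j) {1..n} * L2_set (\<lambda>j. real j * cmod (v (int j))) {1..n} \<le> sqrt 2 * L"
    using h2 h3 by (intro mult_mono) auto
  then show ?thesis using h1 unfolding R0_def by linarith
qed

lemma R0_nonneg: "R0 \<ge> 0" unfolding R0_def using L0 by simp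

lemma H_bound: "cmod (poly (Hn n) (cis \<theta>)) \<le> R0"
proof -
  have "poly (Hn n) (cis \<theta>) = (\<Sum>j\<in>{1..n}. v (int j) * cis \<theta> ^ j)"
    unfolding Hn_def by (simp add: poly_sum poly_monom)
  then have "cmod (poly (Hn n) (cis \<theta>)) \<le> (\<Sum>j\<in>{1..n}. cmod (v (int j) * cis \<theta> ^ j))"
    by (simp add: norm_sum)
  also have "\<dots> = (\<Sum>j\<in>{1..n}. cmod (v (int j)))" by (simp add: norm_mult norm_power)
  also have "\<dots> \<le> R0" by (rule sum_abs_v)
  finally show ?thesis .
qed

definition MV :: real where "MV = (SUP \<theta>\<in>{-pi..pi}. \<bar>V \<theta>\<bar>)"

lemma MV_bound: "\<theta> \<in> {-pi..pi} \<Longrightarrow> \<bar>V \<theta>\<bar> \<le> MV"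
proof -
  assume th: "\<theta> \<in> {-pi..pi}"
  have "compact ((\<lambda>\<theta>. \<bar>V \<theta>\<bar>) ` {-pi..pi})"
    by (intro compact_continuous_image continuous_intros CCV) auto
  then have "bdd_above ((\<lambda>\<theta>. \<bar>V \<theta>\<bar>) ` {-pi..pi})"
    by (intro bounded_imp_bdd_above compact_imp_bounded)
  then show ?thesis unfolding MV_def using th by (intro cSUP_upper)
qed

definition M0 :: real where "M0 = MV + \<bar>V0\<bar> + 2 * R0"

lemma T_bound: "\<bar>T n \<theta>\<bar> \<le> \<bar>V0\<bar> + 2 * R0"
proof -
  have "\<bar>Re (poly (Hn n) (cis \<theta>))\<bar> \<le> R0"
    using H_bound[of n \<theta>] abs_Re_le_cmod order_trans by blast
  then show ?thesis unfolding T_def by linarith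
qed

lemma u_bound: "\<theta> \<in> {-pi..pi} \<Longrightarrow> \<bar>u n \<theta>\<bar> \<le> M0"
  using MV_bound[of \<theta>] T_bound[of n \<theta>] unfolding u_def M0_def by linarith

lemma W_H: "W k (Hn n) \<le> 2 ^ k * L"
proof -
  have "W k (Hn n) = Wt k n (Hn n)" using Wt_eq[OF degree_Hn] by simp
  also have "\<dots> = sqrt (\<Sum>i\<le>n. ((1 + real i) ^ k * cmod (coeff (Hn n) i))\<^sup>2)"
    unfolding Wt_def L2_set_def ..
  also have "(\<Sum>i\<le>n. ((1 + real i) ^ k * cmod (coeff (Hn n) i))\<^sup>2)
      = (\<Sum>i\<in>{1..n}. ((1 + real i) ^ k * cmod (v (int i)))\<^sup>2)"
    by (rule sum.mono_neutral_cong_right) (auto simp: coeff_Hn)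
  also have "\<dots> \<le> (\<Sum>i\<in>{1..n}. 4 ^ k * (real i ^ (2*k) * (cmod (v (int i)))\<^sup>2))"
  proof (rule sum_mono)
    fix i assume i: "i \<in> {1..n}"
    have "(1 + real i) ^ (2*k) \<le> (2 * real i) ^ (2*k)" using i by (intro power_mono) auto
    also have "\<dots> = 4 ^ k * real i ^ (2*k)" by (simp add: power_mult_distrib power_mult)
    finally have "(1 + real i) ^ (2*k) * (cmod (v (int i)))\<^sup>2 \<le> 4 ^ k * real i ^ (2*k) * (cmod (v (int i)))\<^sup>2"
      by (intro mult_right_mono) auto
    then show "((1 + real i) ^ k * cmod (v (int i)))\<^sup>2 \<le> 4 ^ k * (real i ^ (2*k) * (cmod (v (int i)))\<^sup>2)"
      by (simp add: power_mult_distrib power_mult[symmetric] mult.commute[of k] mult.assoc)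
  qed
  also have "\<dots> = 4 ^ k * (\<Sum>i\<in>{1..n}. real i ^ (2*k) * (cmod (v (int i)))\<^sup>2)"
    by (simp add: sum_distrib_left)
  also have "\<dots> \<le> 4 ^ k * L\<^sup>2" using decay_nat by (intro mult_left_mono) auto
  finally have "W k (Hn n) \<le> sqrt (4 ^ k * L\<^sup>2)" by (simp add: real_sqrt_le_mono)
  also have "sqrt (4 ^ k * L\<^sup>2) = 2 ^ k * L"
    using L0 by (simp add: real_sqrt_mult power_mult[symmetric] real_sqrt_power
       flip: power_mult_distrib)
  finally show ?thesis .
qed

end



context szego begin

lemma cont_phi: "continuous_on {-pi..pi} (\<lambda>\<theta>. exp (- V \<theta>))"
  by (intro continuous_intros CCV)

lemma int_cont:
  fixes f :: "real \<Rightarrow> 'a::banach"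
  shows "continuous_on {-pi..pi} f \<Longrightarrow> f integrable_on {-pi..pi}"
  by (rule integrable_continuous_interval) simp

lemma upper:
  fixes p :: "complex poly" and n :: nat
  assumes dp: "degree p = n" and lp: "Im (lead_coeff p) = 0 \<and> Re (lead_coeff p) > 0"
    and op: "circ_inner (\<lambda>\<theta>. exp (- V \<theta>)) p p = 1"
  shows "(Re (lead_coeff p))\<^sup>2 * exp (- V0) \<le> 1 + exp M0 * L\<^sup>2 / (real n + 1) ^ (2*k)"
proof -
  define \<kappa> where "\<kappa> = Re (lead_coeff p)"
  have k0: "\<kappa> > 0" unfolding \<kappa>_def using lp by simp
  have lk: "lead_coeff p = complex_of_real \<kappa>" unfolding \<kappa>_def using lp by (simp add: complex_eq_iff)
  define P where "P = smult (complex_of_real (1/\<kappa>)) p"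
  have dP: "degree P = n" unfolding P_def using k0 dp by simp
  have cPn: "coeff P n = 1" unfolding P_def using k0 lk dp by simp
  define q where "q = revp n P"
  have q0: "coeff q 0 = 1" unfolding q_def by (simp add: coeff_revp cPn)
  have qabs: "cmod (poly q (cis \<theta>)) = cmod (poly p (cis \<theta>)) / \<kappa>" for \<theta>
  proof -
    have "cmod (poly q (cis \<theta>)) = cmod (poly P (cis \<theta>))" unfolding q_def using dP by (intro cmod_poly_revp) simp
    also have "\<dots> = cmod (poly p (cis \<theta>)) / \<kappa>" unfolding P_def using k0 by (simp add: norm_mult norm_divide)
    finally show ?thesis .
  qed
  define \<phi> where "\<phi> = (\<lambda>\<theta>. exp (- V \<theta>))"
  have c\<phi>: "continuous_on {-pi..pi} \<phi>" unfolding \<phi>_def by (rule cont_phi)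
  have pp: "integral {-pi..pi} (\<lambda>\<theta>. (cmod (poly p (cis \<theta>)))\<^sup>2 * \<phi> \<theta>) = 2 * pi"
  proof -
    have "complex_of_real (rn \<phi> p) = 1" using ci_self[OF c\<phi>, of p] op unfolding \<phi>_def by simp
    then have "rn \<phi> p = 1" by (metis of_real_eq_1_iff)
    then show ?thesis unfolding rn_def by (simp add: field_simps)
  qed
  define F where "F = (\<lambda>z. poly q z * exp (- poly (Hn n) z))"
  have mvF: "integral {-pi..pi} (\<lambda>\<theta>. F (cis \<theta>)) = complex_of_real (2 * pi)"
  proof -
    have "F holomorphic_on UNIV" unfolding F_def by (intro holomorphic_intros)
    moreover have "F 0 = 1" unfolding F_def using q0 poly_Hn0[of n] by (simp add: poly_0_coeff_0)
    ultimately show ?thesis using mean_value_entire[of F] by simp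
  qed
  define g where "g = (\<lambda>\<theta>. ((cmod (poly p (cis \<theta>)))\<^sup>2 * \<phi> \<theta> + (exp V0 / \<kappa>\<^sup>2) * exp (u n \<theta>)) / 2)"
  have pt: "cmod (F (cis \<theta>)) \<le> g \<theta>" for \<theta>
  proof -
    define a where "a = cmod (poly q (cis \<theta>)) * exp (- V \<theta> / 2)"
    define b where "b = exp ((V \<theta> - T n \<theta> + V0) / 2)"
    have "cmod (F (cis \<theta>)) = cmod (poly q (cis \<theta>)) * exp (- Re (poly (Hn n) (cis \<theta>)))"
      unfolding F_def by (simp add: norm_mult)
    also have "- Re (poly (Hn n) (cis \<theta>)) = (V0 - T n \<theta>) / 2" unfolding T_def by simp
    also have "cmod (poly q (cis \<theta>)) * exp ((V0 - T n \<theta>) / 2) = a * b"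
      unfolding a_def b_def by (simp add: mult.assoc exp_add[symmetric] field_simps)
    also have "a * b \<le> (\<kappa>\<^sup>2 * a\<^sup>2 + b\<^sup>2 / \<kappa>\<^sup>2) / 2"
    proof -
      have "0 \<le> (\<kappa> * a - b / \<kappa>)\<^sup>2" by simp
      then show ?thesis using k0 by (simp add: power2_eq_square field_simps)
    qed
    also have "\<kappa>\<^sup>2 * a\<^sup>2 = (cmod (poly p (cis \<theta>)))\<^sup>2 * \<phi> \<theta>"
    proof -
      have "a\<^sup>2 = (cmod (poly q (cis \<theta>)))\<^sup>2 * exp (- V \<theta>)"
        unfolding a_def by (simp add: power_mult_distrib exp_double[symmetric] power2_eq_square exp_add[symmetric])
      then show ?thesis unfolding qabs \<phi>_def using k0 by (simp add: power_divide)
    qed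
    also have "b\<^sup>2 = exp V0 * exp (u n \<theta>)"
      unfolding b_def u_def by (simp add: power2_eq_square exp_add[symmetric] field_simps)
    finally show ?thesis unfolding g_def by simp
  qed
  have cF: "continuous_on {-pi..pi} (\<lambda>\<theta>. F (cis \<theta>))" unfolding F_def by (intro continuous_intros)
  have cg: "continuous_on {-pi..pi} g" unfolding g_def \<phi>_def by (intro continuous_intros cont_u CCV) auto
  have "2 * pi = cmod (integral {-pi..pi} (\<lambda>\<theta>. F (cis \<theta>)))" using mvF by simp
  also have "\<dots> \<le> integral {-pi..pi} g"
    by (rule integral_norm_bound_integral[OF int_cont[OF cF] int_cont[OF cg]]) (use pt in auto)
  also have "integral {-pi..pi} g = (2 * pi + (exp V0 / \<kappa>\<^sup>2) * integral {-pi..pi} (\<lambda>\<theta>. exp (u n \<theta>))) / 2"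
  proof -
    have i1: "(\<lambda>\<theta>. (cmod (poly p (cis \<theta>)))\<^sup>2 * \<phi> \<theta>) integrable_on {-pi..pi}"
      by (intro int_cont continuous_intros c\<phi>)
    have i2: "(\<lambda>\<theta>. (exp V0 / \<kappa>\<^sup>2) * exp (u n \<theta>)) integrable_on {-pi..pi}"
      by (intro int_cont continuous_intros cont_u)
    have "integral {-pi..pi} g = integral {-pi..pi} (\<lambda>\<theta>. (cmod (poly p (cis \<theta>)))\<^sup>2 * \<phi> \<theta> + (exp V0 / \<kappa>\<^sup>2) * exp (u n \<theta>)) / 2"
      unfolding g_def by (rule Henstock_Kurzweil_Integration.integral_divide)
    also have "\<dots> = (2 * pi + (exp V0 / \<kappa>\<^sup>2) * integral {-pi..pi} (\<lambda>\<theta>. exp (u n \<theta>))) / 2"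
      using integral_add[OF i1 i2] pp by simp
    finally show ?thesis .
  qed
  finally have A1: "2 * pi \<le> (exp V0 / \<kappa>\<^sup>2) * integral {-pi..pi} (\<lambda>\<theta>. exp (u n \<theta>))" by simp
  have "integral {-pi..pi} (\<lambda>\<theta>. exp (u n \<theta>)) \<le> integral {-pi..pi} (\<lambda>\<theta>. 1 + u n \<theta> + exp M0 * (u n \<theta>)\<^sup>2)"
    by (rule integral_le) (auto intro!: int_cont continuous_intros cont_u exp_quad u_bound)
  also have "\<dots> = 2 * pi + integral {-pi..pi} (u n) + exp M0 * integral {-pi..pi} (\<lambda>\<theta>. (u n \<theta>)\<^sup>2)"
  proof -
    have i1: "(\<lambda>\<theta>. 1 + u n \<theta>) integrable_on {-pi..pi}" by (intro int_cont continuous_intros cont_u)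
    have i2: "(\<lambda>\<theta>. exp M0 * (u n \<theta>)\<^sup>2) integrable_on {-pi..pi}" by (intro int_cont continuous_intros cont_u)
    have i3: "(\<lambda>\<theta>. 1::real) integrable_on {-pi..pi}" by (intro int_cont continuous_intros)
    have i4: "u n integrable_on {-pi..pi}" by (intro int_cont cont_u)
    show ?thesis using integral_add[OF i1 i2] integral_add[OF i3 i4] by simp
  qed
  also have "\<dots> \<le> 2 * pi + 0 + exp M0 * (2 * pi * L\<^sup>2 / (real n + 1) ^ (2*k))"
    using int_u[of n] int_u2[of n] by (intro add_mono mult_left_mono) auto
  finally have A2: "integral {-pi..pi} (\<lambda>\<theta>. exp (u n \<theta>)) \<le> 2 * pi * (1 + exp M0 * L\<^sup>2 / (real n + 1) ^ (2*k))"
    by (simp add: algebra_simps)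
  define X where "X = 1 + exp M0 * L\<^sup>2 / (real n + 1) ^ (2*k)"
  have "(exp V0 / \<kappa>\<^sup>2) * integral {-pi..pi} (\<lambda>\<theta>. exp (u n \<theta>)) \<le> (exp V0 / \<kappa>\<^sup>2) * (2 * pi * X)"
    unfolding X_def by (rule mult_left_mono[OF A2]) simp
  then have "2 * pi \<le> (exp V0 / \<kappa>\<^sup>2) * (2 * pi * X)" using A1 by linarith
  then have "2 * pi \<le> (2 * pi) * (exp V0 * X) / \<kappa>\<^sup>2" by (simp add: field_simps)
  then have "2 * pi * \<kappa>\<^sup>2 \<le> (2 * pi) * (exp V0 * X)" using k0 by (simp add: pos_le_divide_eq)
  then have "\<kappa>\<^sup>2 \<le> exp V0 * X" by (simp add: mult_le_cancel_left_pos)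
  then have "\<kappa>\<^sup>2 \<le> exp V0 * (1 + exp M0 * L\<^sup>2 / (real n + 1) ^ (2*k))" unfolding X_def .
  then have "\<kappa>\<^sup>2 * exp (- V0) \<le> exp V0 * (1 + exp M0 * L\<^sup>2 / (real n + 1) ^ (2*k)) * exp (- V0)"
    by (intro mult_right_mono) auto
  then show ?thesis unfolding \<kappa>_def by (simp add: exp_minus field_simps)
qed

end



lemma quad_ineq:
  fixes a b x M :: real
  assumes ab: "a\<^sup>2 \<le> b" and xM: "\<bar>x\<bar> \<le> M" and A0: "0 \<le> 1 + 2*a + b"
  shows "(1 + 2*a + b) * exp (- x) \<le> 1 + 2*a - x + (2 + M + exp M + exp M * M + exp M * M\<^sup>2) * (b + x\<^sup>2)"
proof -
  define c where "c = exp M"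
  have c0: "c \<ge> 0" unfolding c_def by simp
  have M0: "M \<ge> 0" using xM by simp
  have b0: "b \<ge> 0" using ab by (meson order_trans zero_le_power2)
  have e: "exp (- x) \<le> 1 - x + c * x\<^sup>2" unfolding c_def using exp_quad[of "-x" M] xM by simp
  have "(1 + 2*a + b) * exp (- x) \<le> (1 + 2*a + b) * (1 - x + c * x\<^sup>2)"
    using A0 e by (rule mult_left_mono[rotated])
  also have "\<dots> = 1 + 2*a - x + (b + (- 2*a*x) + (- b*x) + c * x\<^sup>2 + c * (2*a*x\<^sup>2) + c * (b*x\<^sup>2))"
    by (simp add: algebra_simps power2_eq_square)
  also have "\<dots> \<le> 1 + 2*a - x + (b + (b + x\<^sup>2) + b*M + c * x\<^sup>2 + c * (M*(b + x\<^sup>2)) + c * (b*M\<^sup>2))"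
  proof -
    have t1: "- 2*a*x \<le> b + x\<^sup>2"
    proof -
      have "0 \<le> (a + x)\<^sup>2" by simp
      then have "- 2*a*x \<le> a\<^sup>2 + x\<^sup>2" by (simp add: power2_eq_square algebra_simps)
      then show ?thesis using ab by linarith
    qed
    have t2: "- b*x \<le> b*M"
    proof -
      have "- x \<le> M" using xM by linarith
      then show ?thesis using b0 mult_left_mono by fastforce
    qed
    have t3: "2*a*x\<^sup>2 \<le> M*(b + x\<^sup>2)"
    proof -
      have "2*\<bar>a\<bar>*\<bar>x\<bar> \<le> a\<^sup>2 + x\<^sup>2"
      proof -
        have "0 \<le> (\<bar>a\<bar> - \<bar>x\<bar>)\<^sup>2" by simp
        then show ?thesis by (simp add: power2_eq_square algebra_simps)
      qed
      then have "2*\<bar>a\<bar>*\<bar>x\<bar> \<le> b + x\<^sup>2" using ab by linarith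
      then have h1: "(2*\<bar>a\<bar>*\<bar>x\<bar>) * \<bar>x\<bar> \<le> (b + x\<^sup>2) * M"
        using xM b0 by (intro mult_mono) auto
      have h2: "2*a*x\<^sup>2 \<le> (2*\<bar>a\<bar>*\<bar>x\<bar>) * \<bar>x\<bar>"
        by (simp add: power2_eq_square abs_mult[symmetric] mult.assoc)
      have "2*a*x\<^sup>2 \<le> (b + x\<^sup>2) * M" using order_trans[OF h2 h1] .
      then show ?thesis by (simp only: mult.commute)
    qed
    have t4: "b*x\<^sup>2 \<le> b*M\<^sup>2"
    proof -
      have "x\<^sup>2 \<le> M\<^sup>2" using xM by (metis abs_le_square_iff power2_abs abs_of_nonneg M0 abs_ge_zero order_trans)
      then show ?thesis using b0 by (rule mult_left_mono)
    qed
    have "c * (2*a*x\<^sup>2) \<le> c * (M*(b + x\<^sup>2))" using t3 c0 by (rule mult_left_mono)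
    moreover have "c * (b*x\<^sup>2) \<le> c * (b*M\<^sup>2)" using t4 c0 by (rule mult_left_mono)
    ultimately show ?thesis using t1 t2 by linarith
  qed
  also have "\<dots> = 1 + 2*a - x + ((2 + M + c*M + c*M\<^sup>2) * b + (1 + c + c*M) * x\<^sup>2)"
    by (simp add: algebra_simps)
  also have "\<dots> \<le> 1 + 2*a - x + (2 + M + c + c * M + c * M\<^sup>2) * (b + x\<^sup>2)"
  proof -
    have "(2 + M + c*M + c*M\<^sup>2) * b \<le> (2 + M + c + c * M + c * M\<^sup>2) * b"
      using b0 c0 by (intro mult_right_mono) auto
    moreover have "(1 + c + c*M) * x\<^sup>2 \<le> (2 + M + c + c * M + c * M\<^sup>2) * x\<^sup>2"
      using M0 c0 by (intro mult_right_mono) (auto intro: add_nonneg_nonneg)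
    ultimately show ?thesis by (simp add: distrib_left)
  qed
  finally show ?thesis unfolding c_def .
qed

context szego begin

definition K1 :: real where "K1 = 2 + M0 + exp M0 + exp M0 * M0 + exp M0 * M0\<^sup>2"
definition B1 :: real where "B1 = exp (2 ^ (k+2) * (2 ^ k * L))"
definition K2 :: real where "K2 = K1 * (exp (2 * R0) * 2 * (B1\<^sup>2 + 1) + L\<^sup>2)"

lemma M0_nonneg: "M0 \<ge> 0"
  using u_bound[of 0 0] by simp

lemma K1_nonneg: "K1 \<ge> 0"
  unfolding K1_def using M0_nonneg by (intro add_nonneg_nonneg mult_nonneg_nonneg) auto

lemma K2_nonneg: "K2 \<ge> 0"
  unfolding K2_def using K1_nonneg by (intro mult_nonneg_nonneg add_nonneg_nonneg) auto

lemma near_opt: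
  "\<exists>q. degree q \<le> n \<and> coeff q 0 = 1 \<and>
     integral {-pi..pi} (\<lambda>\<theta>. (cmod (poly q (cis \<theta>)))\<^sup>2 * exp (- V \<theta>))
       \<le> 2 * pi * exp (- V0) * (1 + K2 / (real n + 1) ^ (2*k))"
proof -
  define H where "H = Hn n"
  define \<epsilon> where "\<epsilon> = 1 / (real n + 1) ^ k"
  have e0: "\<epsilon> > 0" unfolding \<epsilon>_def by simp
  have e2: "\<epsilon>\<^sup>2 = 1 / (real n + 1) ^ (2*k)" unfolding \<epsilon>_def by (simp add: power_divide power_mult[symmetric] mult.commute)
  have "eventually (\<lambda>L. exp R0 - (\<Sum>l\<le>L. R0 ^ l /\<^sub>R fact l) < \<epsilon>) sequentially"
    using order_tendstoD(2)[OF exp_trunc_lim e0] .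
  then obtain L' where tl: "exp R0 - (\<Sum>l\<le>L'. R0 ^ l /\<^sub>R fact l) < \<epsilon>"
    unfolding eventually_sequentially by blast
  define PL where "PL = EP L' H"
  define q where "q = (\<Sum>i\<le>n. monom (coeff PL i) i)"
  have coeff_q: "coeff q i = (if i \<le> n then coeff PL i else 0)" for i
    unfolding q_def by (simp add: coeff_sum coeff_monom)
  have dq: "degree q \<le> n" by (rule degree_le) (auto simp: coeff_q)
  have q0: "coeff q 0 = 1" using coeff_q[of 0] coeff_EP_0[OF coeff_Hn0] unfolding PL_def H_def by simp
  define G where "G = (\<lambda>\<theta>. exp (- poly H (cis \<theta>)))"
  define E where "E = (\<lambda>\<theta>. exp (poly H (cis \<theta>)))"
  define s where "s = (\<lambda>\<theta>. poly q (cis \<theta>) * G \<theta> - 1)"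
  have cs: "continuous_on {-pi..pi} s" unfolding s_def G_def by (intro continuous_intros)
  have EG: "E \<theta> * G \<theta> = 1" for \<theta> unfolding E_def G_def by (rule exp_minus_inverse)
  have int_s: "integral {-pi..pi} s = 0"
  proof -
    define F where "F = (\<lambda>z. poly q z * exp (- poly H z))"
    have "F holomorphic_on UNIV" unfolding F_def by (intro holomorphic_intros)
    moreover have "F 0 = 1" unfolding F_def H_def using q0 poly_Hn0[of n] by (simp add: poly_0_coeff_0)
    ultimately have mv: "integral {-pi..pi} (\<lambda>\<theta>. F (cis \<theta>)) = complex_of_real (2 * pi)"
      using mean_value_entire[of F] by simp
    have i1: "(\<lambda>\<theta>. F (cis \<theta>)) integrable_on {-pi..pi}" unfolding F_def by (intro int_cont continuous_intros)
    have i2: "(\<lambda>\<theta>. 1::complex) integrable_on {-pi..pi}" by (intro int_cont continuous_intros)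
    have "integral {-pi..pi} s = integral {-pi..pi} (\<lambda>\<theta>. F (cis \<theta>)) - integral {-pi..pi} (\<lambda>\<theta>. 1::complex)"
      unfolding s_def G_def F_def using integral_diff[OF i1 i2] unfolding F_def by simp
    then show ?thesis using mv by (simp add: scaleR_conv_of_real)
  qed
  have int_Re_s: "integral {-pi..pi} (\<lambda>\<theta>. Re (s \<theta>)) = 0"
    using integral_linear[OF int_cont[OF cs] bounded_linear_Re] int_s by (simp add: o_def)
  have s_bound: "cmod (s \<theta>) \<le> exp R0 * (cmod (poly (q - PL) (cis \<theta>)) + \<epsilon>)" for \<theta>
  proof -
    have HB: "cmod (poly H (cis \<theta>)) \<le> R0" unfolding H_def by (rule H_bound)
    have "s \<theta> = (poly q (cis \<theta>) - E \<theta>) * G \<theta>" unfolding s_def using EG[of \<theta>] by (simp add: algebra_simps)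
    then have sA: "cmod (s \<theta>) = cmod (poly q (cis \<theta>) - E \<theta>) * cmod (G \<theta>)" by (simp add: norm_mult)
    have gB: "cmod (G \<theta>) \<le> exp R0"
    proof -
      have "- Re (poly H (cis \<theta>)) \<le> R0" using HB abs_Re_le_cmod[of "poly H (cis \<theta>)"] by linarith
      then show ?thesis unfolding G_def by simp
    qed
    have aB: "cmod (poly q (cis \<theta>) - E \<theta>) \<le> cmod (poly (q - PL) (cis \<theta>)) + \<epsilon>"
    proof -
      have "cmod (poly PL (cis \<theta>) - E \<theta>) \<le> exp R0 - (\<Sum>l\<le>L'. R0 ^ l /\<^sub>R fact l)"
      proof -
        have "cmod (poly PL (cis \<theta>) - E \<theta>) = cmod (exp (poly H (cis \<theta>)) - (\<Sum>l\<le>L'. (poly H (cis \<theta>)) ^ l /\<^sub>R fact l))"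
          unfolding PL_def E_def poly_EP by (simp add: norm_minus_commute)
        also have "\<dots> \<le> exp R0 - (\<Sum>l\<le>L'. R0 ^ l /\<^sub>R fact l)" by (rule exp_trunc[OF HB])
        finally show ?thesis .
      qed
      then have "cmod (poly PL (cis \<theta>) - E \<theta>) \<le> \<epsilon>" using tl by linarith
      moreover have "poly q (cis \<theta>) - E \<theta> = poly (q - PL) (cis \<theta>) + (poly PL (cis \<theta>) - E \<theta>)" by simp
      ultimately show ?thesis by (metis add_left_mono norm_triangle_ineq order_trans)
    qed
    have "cmod (poly q (cis \<theta>) - E \<theta>) * cmod (G \<theta>) \<le> (cmod (poly (q - PL) (cis \<theta>)) + \<epsilon>) * exp R0"
      using aB gB e0 by (intro mult_mono) (auto intro: add_nonneg_nonneg less_imp_le)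
    then show ?thesis using sA by (simp add: mult.commute)
  qed
  have WPL: "W k PL \<le> B1"
  proof -
    have "W k PL \<le> exp (2 ^ (k+2) * W k H)" unfolding PL_def by (rule W_EP[OF k])
    also have "\<dots> \<le> B1" unfolding B1_def H_def using W_H[of n] by simp
    finally show ?thesis .
  qed
  define q2 where "q2 = (real n + 1) ^ (2*k)"
  have q2p: "q2 > 0" unfolding q2_def by simp
  have d2: "integral {-pi..pi} (\<lambda>\<theta>. (cmod (poly (q - PL) (cis \<theta>)))\<^sup>2) \<le> 2 * pi * B1\<^sup>2 / q2"
  proof -
    define N where "N = max n (degree PL)"
    have dN: "degree (q - PL) \<le> N" unfolding N_def using dq
      by (intro degree_diff_le) auto
    have dPL: "degree PL \<le> N" unfolding N_def by simp
    have "integral {-pi..pi} (\<lambda>\<theta>. (cmod (poly (q - PL) (cis \<theta>)))\<^sup>2) = nrm (\<lambda>\<theta>. poly (q - PL) (cis \<theta>))"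
      by (rule nrm_eq[symmetric]) (intro continuous_intros)
    also have "\<dots> = 2 * pi * (\<Sum>i\<le>N. (cmod (coeff (q - PL) i))\<^sup>2)" by (rule nrm_poly[OF dN])
    also have "(\<Sum>i\<le>N. (cmod (coeff (q - PL) i))\<^sup>2) \<le> (\<Sum>i\<le>N. ((1 + real i) ^ k * cmod (coeff PL i))\<^sup>2 / q2)"
    proof (rule sum_mono)
      fix i assume "i \<in> {..N}"
      show "(cmod (coeff (q - PL) i))\<^sup>2 \<le> ((1 + real i) ^ k * cmod (coeff PL i))\<^sup>2 / q2"
      proof (cases "i \<le> n")
        case True
        then show ?thesis using q2p by (simp add: coeff_q)
      next
        case False
        then have "real n + 1 \<le> 1 + real i" by simp
        then have "q2 \<le> (1 + real i) ^ (2*k)" unfolding q2_def by (intro power_mono) auto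
        then have "1 * (cmod (coeff PL i))\<^sup>2 \<le> ((1 + real i) ^ (2*k) / q2) * (cmod (coeff PL i))\<^sup>2"
          using q2p by (intro mult_right_mono) auto
        then show ?thesis using False
          by (simp add: coeff_q power_mult_distrib power_mult[symmetric] mult.commute[of k])
      qed
    qed
    also have "\<dots> = (Wt k N PL)\<^sup>2 / q2"
      unfolding Wt_def L2_set_def by (simp add: sum_divide_distrib sum_nonneg)
    also have "Wt k N PL = W k PL" by (rule Wt_eq[OF dPL])
    finally have "integral {-pi..pi} (\<lambda>\<theta>. (cmod (poly (q - PL) (cis \<theta>)))\<^sup>2) \<le> 2 * pi * ((W k PL)\<^sup>2 / q2)"
      by simp
    also have "\<dots> \<le> 2 * pi * (B1\<^sup>2 / q2)"
      using WPL W_nonneg[of k PL] q2p by (intro mult_left_mono divide_right_mono power_mono) auto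
    finally show ?thesis by simp
  qed
  have s2: "integral {-pi..pi} (\<lambda>\<theta>. (cmod (s \<theta>))\<^sup>2) \<le> exp (2 * R0) * 2 * (2 * pi * B1\<^sup>2 / q2 + 2 * pi / q2)"
  proof -
    have "integral {-pi..pi} (\<lambda>\<theta>. (cmod (s \<theta>))\<^sup>2)
        \<le> integral {-pi..pi} (\<lambda>\<theta>. exp (2 * R0) * 2 * ((cmod (poly (q - PL) (cis \<theta>)))\<^sup>2 + \<epsilon>\<^sup>2))"
    proof (rule integral_le)
      show "(\<lambda>\<theta>. (cmod (s \<theta>))\<^sup>2) integrable_on {-pi..pi}" by (intro int_cont continuous_intros cs)
      show "(\<lambda>\<theta>. exp (2 * R0) * 2 * ((cmod (poly (q - PL) (cis \<theta>)))\<^sup>2 + \<epsilon>\<^sup>2)) integrable_on {-pi..pi}"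
        by (intro int_cont continuous_intros)
      fix \<theta> :: real
      define d where "d = cmod (poly (q - PL) (cis \<theta>))"
      have "(cmod (s \<theta>))\<^sup>2 \<le> (exp R0 * (d + \<epsilon>))\<^sup>2"
        unfolding d_def by (intro power_mono s_bound) auto
      also have "\<dots> = exp (2 * R0) * (d + \<epsilon>)\<^sup>2"
        by (simp add: power_mult_distrib exp_double[symmetric] power2_eq_square exp_add[symmetric])
      also have "(d + \<epsilon>)\<^sup>2 \<le> 2 * (d\<^sup>2 + \<epsilon>\<^sup>2)"
      proof -
        have "0 \<le> (d - \<epsilon>)\<^sup>2" by simp
        then show ?thesis by (simp add: power2_eq_square algebra_simps)
      qed
      finally show "(cmod (s \<theta>))\<^sup>2 \<le> exp (2 * R0) * 2 * ((cmod (poly (q - PL) (cis \<theta>)))\<^sup>2 + \<epsilon>\<^sup>2)"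
        unfolding d_def by (simp add: mult_left_mono mult.assoc)
    qed
    also have "\<dots> = exp (2 * R0) * 2 * (integral {-pi..pi} (\<lambda>\<theta>. (cmod (poly (q - PL) (cis \<theta>)))\<^sup>2) + 2 * pi * \<epsilon>\<^sup>2)"
    proof -
      have i1: "(\<lambda>\<theta>. (cmod (poly (q - PL) (cis \<theta>)))\<^sup>2) integrable_on {-pi..pi}" by (intro int_cont continuous_intros)
      have i2: "(\<lambda>\<theta>. \<epsilon>\<^sup>2) integrable_on {-pi..pi}" by (intro int_cont continuous_intros)
      show ?thesis using integral_add[OF i1 i2] by simp
    qed
    also have "\<dots> \<le> exp (2 * R0) * 2 * (2 * pi * B1\<^sup>2 / q2 + 2 * pi / q2)"
      using d2 e2 unfolding q2_def by (intro mult_left_mono add_mono) auto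
    finally show ?thesis .
  qed
  have c1: "(cmod (1 + s \<theta>))\<^sup>2 = 1 + 2 * Re (s \<theta>) + (cmod (s \<theta>))\<^sup>2" for \<theta>
    by (simp only: cmod_power2) (simp add: power2_eq_square algebra_simps)
  have ident: "(cmod (poly q (cis \<theta>)))\<^sup>2 * exp (- V \<theta>)
      = exp (- V0) * ((1 + 2 * Re (s \<theta>) + (cmod (s \<theta>))\<^sup>2) * exp (- u n \<theta>))" for \<theta>
  proof -
    have qe: "poly q (cis \<theta>) = (1 + s \<theta>) * E \<theta>"
    proof -
      have "(1 + s \<theta>) * E \<theta> = poly q (cis \<theta>) * (E \<theta> * G \<theta>)" unfolding s_def by (simp add: algebra_simps)
      then show ?thesis using EG[of \<theta>] by simp
    qed
    have c2: "(cmod (E \<theta>))\<^sup>2 = exp (T n \<theta> - V0)"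
      unfolding E_def T_def H_def by (simp add: power2_eq_square exp_add[symmetric])
    have "(cmod (poly q (cis \<theta>)))\<^sup>2 * exp (- V \<theta>) = (cmod (1 + s \<theta>))\<^sup>2 * ((cmod (E \<theta>))\<^sup>2 * exp (- V \<theta>))"
      unfolding qe by (simp add: norm_mult power_mult_distrib)
    also have "(cmod (E \<theta>))\<^sup>2 * exp (- V \<theta>) = exp (- V0) * exp (- u n \<theta>)"
      unfolding c2 u_def by (simp add: exp_add[symmetric])
    finally show ?thesis unfolding c1 by (simp add: mult_ac)
  qed
  have pw: "(cmod (poly q (cis \<theta>)))\<^sup>2 * exp (- V \<theta>)
      \<le> exp (- V0) * (1 + 2 * Re (s \<theta>) - u n \<theta> + K1 * ((cmod (s \<theta>))\<^sup>2 + (u n \<theta>)\<^sup>2))"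
    if th: "\<theta> \<in> {-pi..pi}" for \<theta>
  proof -
    have ab: "(Re (s \<theta>))\<^sup>2 \<le> (cmod (s \<theta>))\<^sup>2"
      using abs_Re_le_cmod[of "s \<theta>"] by (metis abs_ge_zero power2_abs power_mono)
    have A0: "0 \<le> 1 + 2 * Re (s \<theta>) + (cmod (s \<theta>))\<^sup>2"
      using c1[of \<theta>] zero_le_power2[of "cmod (1 + s \<theta>)"] by linarith
    have "(1 + 2 * Re (s \<theta>) + (cmod (s \<theta>))\<^sup>2) * exp (- u n \<theta>)
        \<le> 1 + 2 * Re (s \<theta>) - u n \<theta> + K1 * ((cmod (s \<theta>))\<^sup>2 + (u n \<theta>)\<^sup>2)"
      unfolding K1_def by (rule quad_ineq[OF ab u_bound[OF th] A0])
    then show ?thesis unfolding ident by (intro mult_left_mono) auto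
  qed
  have cq: "continuous_on {-pi..pi} (\<lambda>\<theta>. (cmod (poly q (cis \<theta>)))\<^sup>2 * exp (- V \<theta>))"
    by (intro continuous_intros CCV)
  have cu: "continuous_on {-pi..pi} (u n)" by (rule cont_u)
  have "integral {-pi..pi} (\<lambda>\<theta>. (cmod (poly q (cis \<theta>)))\<^sup>2 * exp (- V \<theta>))
      \<le> integral {-pi..pi} (\<lambda>\<theta>. exp (- V0) * (1 + 2 * Re (s \<theta>) - u n \<theta> + K1 * ((cmod (s \<theta>))\<^sup>2 + (u n \<theta>)\<^sup>2)))"
    by (rule integral_le[OF int_cont[OF cq]]) (auto intro!: int_cont continuous_intros cs cu pw)
  also have "\<dots> = exp (- V0) * (2 * pi + 2 * integral {-pi..pi} (\<lambda>\<theta>. Re (s \<theta>)) - integral {-pi..pi} (u n)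
        + K1 * (integral {-pi..pi} (\<lambda>\<theta>. (cmod (s \<theta>))\<^sup>2) + integral {-pi..pi} (\<lambda>\<theta>. (u n \<theta>)\<^sup>2)))"
  proof -
    have i1: "(\<lambda>\<theta>. 1::real) integrable_on {-pi..pi}" by (intro int_cont continuous_intros)
    have i2: "(\<lambda>\<theta>. 2 * Re (s \<theta>)) integrable_on {-pi..pi}" by (intro int_cont continuous_intros cs)
    have i3: "u n integrable_on {-pi..pi}" by (intro int_cont cu)
    have i4: "(\<lambda>\<theta>. (cmod (s \<theta>))\<^sup>2) integrable_on {-pi..pi}" by (intro int_cont continuous_intros cs)
    have i5: "(\<lambda>\<theta>. (u n \<theta>)\<^sup>2) integrable_on {-pi..pi}" by (intro int_cont continuous_intros cu)
    have i12: "(\<lambda>\<theta>. 1 + 2 * Re (s \<theta>)) integrable_on {-pi..pi}" using integrable_add[OF i1 i2] by simp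
    have i123: "(\<lambda>\<theta>. 1 + 2 * Re (s \<theta>) - u n \<theta>) integrable_on {-pi..pi}" using integrable_diff[OF i12 i3] by simp
    have i45: "(\<lambda>\<theta>. K1 * ((cmod (s \<theta>))\<^sup>2 + (u n \<theta>)\<^sup>2)) integrable_on {-pi..pi}"
      by (intro int_cont continuous_intros cs cu)
    have "integral {-pi..pi} (\<lambda>\<theta>. 1 + 2 * Re (s \<theta>) - u n \<theta> + K1 * ((cmod (s \<theta>))\<^sup>2 + (u n \<theta>)\<^sup>2))
        = integral {-pi..pi} (\<lambda>\<theta>. 1 + 2 * Re (s \<theta>) - u n \<theta>) + integral {-pi..pi} (\<lambda>\<theta>. K1 * ((cmod (s \<theta>))\<^sup>2 + (u n \<theta>)\<^sup>2))"
      by (rule integral_add[OF i123 i45])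
    also have "integral {-pi..pi} (\<lambda>\<theta>. 1 + 2 * Re (s \<theta>) - u n \<theta>) = integral {-pi..pi} (\<lambda>\<theta>. 1 + 2 * Re (s \<theta>)) - integral {-pi..pi} (u n)"
      using integral_diff[OF i12 i3] by simp
    also have "integral {-pi..pi} (\<lambda>\<theta>. 1 + 2 * Re (s \<theta>)) = 2 * pi + 2 * integral {-pi..pi} (\<lambda>\<theta>. Re (s \<theta>))"
      using integral_add[OF i1 i2] by simp
    also have "integral {-pi..pi} (\<lambda>\<theta>. K1 * ((cmod (s \<theta>))\<^sup>2 + (u n \<theta>)\<^sup>2))
        = K1 * (integral {-pi..pi} (\<lambda>\<theta>. (cmod (s \<theta>))\<^sup>2) + integral {-pi..pi} (\<lambda>\<theta>. (u n \<theta>)\<^sup>2))"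
      using integral_add[OF i4 i5] by simp
    finally show ?thesis by simp
  qed
  also have "\<dots> \<le> exp (- V0) * (2 * pi + 2 * 0 - 0 + K1 * (exp (2 * R0) * 2 * (2 * pi * B1\<^sup>2 / q2 + 2 * pi / q2) + 2 * pi * L\<^sup>2 / q2))"
    using int_Re_s int_u[of n] s2 int_u2[of n] K1_nonneg unfolding q2_def
    by (intro mult_left_mono add_mono) auto
  also have "\<dots> = 2 * pi * exp (- V0) * (1 + K2 / (real n + 1) ^ (2*k))"
    unfolding K2_def q2_def by (simp add: field_simps)
  finally show ?thesis using dq q0 by blast
qed

end



context szego begin

lemma lower:
  fixes p :: "nat \<Rightarrow> complex poly"
  assumes deg: "\<And>n. degree (p n) = n"
    and lead_pos: "\<And>n. Im (lead_coeff (p n)) = 0 \<and> Re (lead_coeff (p n)) > 0"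
    and orth: "\<And>m n. circ_inner (\<lambda>\<theta>. exp (- V \<theta>)) (p m) (p n) = (if m = n then 1 else 0)"
  shows "1 - K2 / (real n + 1) ^ (2*k) \<le> (Re (lead_coeff (p n)))\<^sup>2 * exp (- V0)"
proof -
  obtain q where q: "degree q \<le> n" "coeff q 0 = 1"
    "integral {-pi..pi} (\<lambda>\<theta>. (cmod (poly q (cis \<theta>)))\<^sup>2 * exp (- V \<theta>)) \<le> 2 * pi * exp (- V0) * (1 + K2 / (real n + 1) ^ (2*k))"
    using near_opt[of n] by blast
  define Q where "Q = revp n q"
  have Qd: "degree Q = n" and Ql: "lead_coeff Q = 1" unfolding Q_def using revp_monic[OF q(2)] by auto
  define \<kappa> where "\<kappa> = Re (lead_coeff (p n))"
  have k0: "\<kappa> > 0" unfolding \<kappa>_def using lead_pos by simp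
  have "1 / \<kappa>\<^sup>2 \<le> rn (\<lambda>\<theta>. exp (- V \<theta>)) Q"
    unfolding \<kappa>_def by (rule extremal[OF cont_phi _ deg lead_pos orth Qd Ql]) simp
  also have "rn (\<lambda>\<theta>. exp (- V \<theta>)) Q = (1 / (2 * pi)) * integral {-pi..pi} (\<lambda>\<theta>. (cmod (poly q (cis \<theta>)))\<^sup>2 * exp (- V \<theta>))"
    unfolding rn_def Q_def using cmod_poly_revp[OF q(1)] by simp
  also have "\<dots> \<le> (1 / (2 * pi)) * (2 * pi * exp (- V0) * (1 + K2 / (real n + 1) ^ (2*k)))"
    using q(3) by (intro mult_left_mono) auto
  finally have h: "1 / \<kappa>\<^sup>2 \<le> exp (- V0) * (1 + K2 / (real n + 1) ^ (2*k))" by simp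
  define x where "x = K2 / (real n + 1) ^ (2*k)"
  have x0: "x \<ge> 0" unfolding x_def using K2_nonneg by simp
  have "1 \<le> \<kappa>\<^sup>2 * exp (- V0) * (1 + x)"
    using h k0 unfolding x_def by (simp add: field_simps)
  moreover have "(1 - x) * (1 + x) \<le> 1" by (simp add: algebra_simps)
  ultimately have "(1 - x) * (1 + x) \<le> \<kappa>\<^sup>2 * exp (- V0) * (1 + x)" by linarith
  then have "1 - x \<le> \<kappa>\<^sup>2 * exp (- V0)" using x0 by (simp add: mult_le_cancel_right_pos add_pos_nonneg)
  then show ?thesis unfolding x_def \<kappa>_def .
qed

end

theorem theorem3p7:
  fixes V :: "real \<Rightarrow> real" and k :: nat and p :: "nat \<Rightarrow> complex poly"
  assumes k: "k \<ge> 1"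
    and V: "C_lip_circle k V"
    and deg: "\<And>n. degree (p n) = n"
    and lead_pos: "\<And>n. Im (lead_coeff (p n)) = 0 \<and> Re (lead_coeff (p n)) > 0"
    and orth: "\<And>m n. circ_inner (\<lambda>\<theta>. exp (- V \<theta>)) (p m) (p n) = (if m = n then 1 else 0)"
  shows "\<exists>K > 0. \<forall>\<^sub>F n in sequentially.
           \<bar>(Re (lead_coeff (p n)))\<^sup>2 * exp (- ((1 / (2 * pi)) * integral {-pi..pi} V)) - 1\<bar>
             \<le> K * ln (real n) / real n ^ (2 * k)"
proof -
  obtain D :: "nat \<Rightarrow> real \<Rightarrow> real" and L where
    per: "\<forall>x. V (x + 2 * pi) = V x" and D0: "D 0 = V"
    and Dder: "\<forall>j < k - 1. \<forall>x. (D j has_real_derivative D (Suc j) x) (at x)"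
    and Lip: "\<forall>x y. \<bar>D (k - 1) x - D (k - 1) y\<bar> \<le> L * \<bar>x - y\<bar>"
    using V unfolding C_lip_circle_def by blast
  interpret S: szego V k L D
    by unfold_locales (use k per D0 Dder Lip in auto)
  define K where "K = max (exp S.M0 * L\<^sup>2) S.K2 + 1"
  have K0: "K > 0" unfolding K_def using S.K2_nonneg by (simp add: max_def)
  have "\<forall>n\<ge>3. \<bar>(Re (lead_coeff (p n)))\<^sup>2 * exp (- ((1 / (2 * pi)) * integral {-pi..pi} V)) - 1\<bar>
             \<le> K * ln (real n) / real n ^ (2 * k)"
  proof (intro allI impI)
    fix n :: nat assume n3: "n \<ge> 3"
    define y where "y = (Re (lead_coeff (p n)))\<^sup>2 * exp (- S.V0)"
    have up: "y \<le> 1 + exp S.M0 * L\<^sup>2 / (real n + 1) ^ (2*k)"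
      unfolding y_def using S.upper[OF deg[of n] lead_pos[of n]] orth[of n n] by simp
    have lo: "1 - S.K2 / (real n + 1) ^ (2*k) \<le> y"
      unfolding y_def by (rule S.lower[OF deg lead_pos orth])
    have qp: "(real n + 1) ^ (2*k) > 0" by simp
    have "\<bar>y - 1\<bar> \<le> max (exp S.M0 * L\<^sup>2) S.K2 / (real n + 1) ^ (2*k)"
    proof -
      have "exp S.M0 * L\<^sup>2 / (real n + 1) ^ (2*k) \<le> max (exp S.M0 * L\<^sup>2) S.K2 / (real n + 1) ^ (2*k)"
        using qp by (intro divide_right_mono) auto
      moreover have "S.K2 / (real n + 1) ^ (2*k) \<le> max (exp S.M0 * L\<^sup>2) S.K2 / (real n + 1) ^ (2*k)"
        using qp by (intro divide_right_mono) auto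
      ultimately show ?thesis using up lo by linarith
    qed
    also have "\<dots> \<le> K / (real n + 1) ^ (2*k)"
      unfolding K_def using qp by (intro divide_right_mono) auto
    also have "\<dots> \<le> K / real n ^ (2*k)"
      using K0 n3 by (intro divide_left_mono power_mono mult_pos_pos) auto
    also have "\<dots> \<le> K * ln (real n) / real n ^ (2*k)"
    proof -
      have "1 \<le> ln (real n)"
      proof -
        have "exp 1 \<le> (3::real)" by (rule exp_le)
        also have "\<dots> \<le> real n" using n3 by simp
        finally show ?thesis using n3 by (subst ln_ge_iff) auto
      qed
      then have "K * 1 \<le> K * ln (real n)" using K0 by (intro mult_left_mono) auto
      then show ?thesis using n3 by (intro divide_right_mono) auto
    qed
    finally show "\<bar>(Re (lead_coeff (p n)))\<^sup>2 * exp (- ((1 / (2 * pi)) * integral {-pi..pi} V)) - 1\<bar>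
             \<le> K * ln (real n) / real n ^ (2 * k)"
      unfolding y_def S.V0_def by simp
  qed
  then show ?thesis using K0 unfolding eventually_sequentially by blast
qed


end
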